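(* Let $G$ be a finite group and let $H \le G$ be a subgroup with $H \neq \{e\}$. Let $C_1, \ldots, C_k$ denote the non-identity conjugacy classes of $G$. Then \[ \sum_{i=1}^k \frac{|C_i \cap H|^2}{|H|\,|C_i|} \;<\; D_H \;\le\; \sum_{i=1}^k |C_i \cap H|\,|C_i|^{-1/2}. \]
   Context: For a finite group $G$, let $\mathrm{Irr}(G)$ be the set of complex irreducible characters of $G$, and for $\chi \in \mathrm{Irr}(G)$ let $d_\chi = \chi(e)$ be its degree. For a subgroup $H \le G$ define the probability distribution $P_H$ on $\mathrm{Irr}(G)$ by $P_H(\chi) = \frac{d_\chi}{|G|}\sum_{h \in H}\chi(h)$ (the distribution obtained by weak quantum Fourier sampling), and define the total variation ($L_1$) distance \[ D_H = \sum_{\chi \in \mathrm{Irr}(G)} |P_H(\chi) - P_{\{e\}}(\chi)| = \frac{1}{|G|}\sum_{\chi \in \mathrm{Irr}(G)} d_\chi \Big|\sum_{h \in H,\, h \neq e} \chi(h)\Big|. \] *)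

theory Defs
  imports "HOL-Algebra.Group" "Jordan_Normal_Form.Matrix"
begin

definition is_rep :: "('g, 'b) monoid_scheme \<Rightarrow> nat \<Rightarrow> ('g \<Rightarrow> complex mat) \<Rightarrow> bool" where
  "is_rep G n \<rho> \<longleftrightarrow> 0 < n \<and>
     (\<forall>g \<in> carrier G. \<rho> g \<in> carrier_mat n n) \<and>
     \<rho> \<one>\<^bsub>G\<^esub> = one_mat n \<and>
     (\<forall>g \<in> carrier G. \<forall>h \<in> carrier G. \<rho> (g \<otimes>\<^bsub>G\<^esub> h) = \<rho> g * \<rho> h)"

definition is_subspace_vec :: "nat \<Rightarrow> complex vec set \<Rightarrow> bool" where
  "is_subspace_vec n W \<longleftrightarrow> W \<subseteq> carrier_vec n \<and> 0\<^sub>v n \<in> W \<and>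
     (\<forall>v \<in> W. \<forall>w \<in> W. v + w \<in> W) \<and> (\<forall>c. \<forall>v \<in> W. c \<cdot>\<^sub>v v \<in> W)"

definition is_irr_rep :: "('g, 'b) monoid_scheme \<Rightarrow> nat \<Rightarrow> ('g \<Rightarrow> complex mat) \<Rightarrow> bool" where
  "is_irr_rep G n \<rho> \<longleftrightarrow> is_rep G n \<rho> \<and>
     (\<forall>W. is_subspace_vec n W \<and> (\<forall>g \<in> carrier G. \<forall>v \<in> W. \<rho> g *\<^sub>v v \<in> W)
          \<longrightarrow> W = {0\<^sub>v n} \<or> W = carrier_vec n)"

definition mat_trace :: "complex mat \<Rightarrow> complex" where
  "mat_trace A = (\<Sum>i<dim_row A. A $$ (i, i))"

definition character :: "('g, 'b) monoid_scheme \<Rightarrow> ('g \<Rightarrow> complex mat) \<Rightarrow> 'g \<Rightarrow> complex" where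
  "character G \<rho> = (\<lambda>g. if g \<in> carrier G then mat_trace (\<rho> g) else 0)"

definition Irr :: "('g, 'b) monoid_scheme \<Rightarrow> ('g \<Rightarrow> complex) set" where
  "Irr G = {\<chi>. \<exists>n \<rho>. is_irr_rep G n \<rho> \<and> \<chi> = character G \<rho>}"

definition char_degree :: "('g, 'b) monoid_scheme \<Rightarrow> ('g \<Rightarrow> complex) \<Rightarrow> complex" where
  "char_degree G \<chi> = \<chi> \<one>\<^bsub>G\<^esub>"

definition P_dist :: "('g, 'b) monoid_scheme \<Rightarrow> 'g set \<Rightarrow> ('g \<Rightarrow> complex) \<Rightarrow> complex" where
  "P_dist G H \<chi> = char_degree G \<chi> / of_nat (card (carrier G)) * (\<Sum>h\<in>H. \<chi> h)"

definition D_dist :: "('g, 'b) monoid_scheme \<Rightarrow> 'g set \<Rightarrow> real" where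
  "D_dist G H = (\<Sum>\<chi>\<in>Irr G. cmod (P_dist G H \<chi> - P_dist G {\<one>\<^bsub>G\<^esub>} \<chi>))"

definition conj_class :: "('g, 'b) monoid_scheme \<Rightarrow> 'g \<Rightarrow> 'g set" where
  "conj_class G x = {g \<otimes>\<^bsub>G\<^esub> x \<otimes>\<^bsub>G\<^esub> inv\<^bsub>G\<^esub> g | g. g \<in> carrier G}"

definition conj_classes :: "('g, 'b) monoid_scheme \<Rightarrow> 'g set set" where
  "conj_classes G = conj_class G ` carrier G"

end

theory Submission
  imports Defs "Jordan_Normal_Form.Schur_Decomposition" "HOL-Algebra.Multiplicative_Group"
begin

definition msum :: "nat \<Rightarrow> nat \<Rightarrow> ('x \<Rightarrow> complex mat) \<Rightarrow> 'x set \<Rightarrow> complex mat" where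
  "msum nr nc f S = mat nr nc (\<lambda>(i,j). \<Sum>x\<in>S. f x $$ (i,j))"

lemma msum_carrier[simp]: "msum nr nc f S \<in> carrier_mat nr nc"
  unfolding msum_def by auto

lemma msum_index[simp]: "i < nr \<Longrightarrow> j < nc \<Longrightarrow> msum nr nc f S $$ (i,j) = (\<Sum>x\<in>S. f x $$ (i,j))"
  unfolding msum_def by auto

lemma msum_dims[simp]: "dim_row (msum nr nc f S) = nr" "dim_col (msum nr nc f S) = nc"
  unfolding msum_def by auto

lemma mult_msum_left:
  assumes A: "A \<in> carrier_mat k nr" and f: "\<And>x. x \<in> S \<Longrightarrow> f x \<in> carrier_mat nr nc"
  shows "A * msum nr nc f S = msum k nc (\<lambda>x. A * f x) S"
proof (rule eq_matI)
  fix i j assume ij: "i < dim_row (msum k nc (\<lambda>x. A * f x) S)" "j < dim_col (msum k nc (\<lambda>x. A * f x) S)"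
  hence i: "i < k" and j: "j < nc" by auto
  have "(A * msum nr nc f S) $$ (i,j) = (\<Sum>l<nr. A $$ (i,l) * (\<Sum>x\<in>S. f x $$ (l,j)))"
    using A i j by (simp add: times_mat_def scalar_prod_def row_def col_def sum.atLeast0_lessThan_Suc lessThan_atLeast0)
  also have "\<dots> = (\<Sum>x\<in>S. \<Sum>l<nr. A $$ (i,l) * f x $$ (l,j))"
    by (simp add: sum_distrib_left sum.swap[of _ S])
  also have "\<dots> = (\<Sum>x\<in>S. (A * f x) $$ (i,j))"
    apply (intro sum.cong refl) subgoal for x using f[of x] A i j
      by (simp add: times_mat_def scalar_prod_def row_def col_def lessThan_atLeast0) done
  finally show "(A * msum nr nc f S) $$ (i,j) = msum k nc (\<lambda>x. A * f x) S $$ (i,j)" using i j by simp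
qed (use A in auto)

lemma mult_msum_right:
  assumes B: "B \<in> carrier_mat nc k" and f: "\<And>x. x \<in> S \<Longrightarrow> f x \<in> carrier_mat nr nc"
  shows "msum nr nc f S * B = msum nr k (\<lambda>x. f x * B) S"
proof (rule eq_matI)
  fix i j assume ij: "i < dim_row (msum nr k (\<lambda>x. f x * B) S)" "j < dim_col (msum nr k (\<lambda>x. f x * B) S)"
  hence i: "i < nr" and j: "j < k" by auto
  have "(msum nr nc f S * B) $$ (i,j) = (\<Sum>l<nc. (\<Sum>x\<in>S. f x $$ (i,l)) * B $$ (l,j))"
    using B i j by (simp add: times_mat_def scalar_prod_def row_def col_def lessThan_atLeast0)
  also have "\<dots> = (\<Sum>x\<in>S. \<Sum>l<nc. f x $$ (i,l) * B $$ (l,j))"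
    by (simp add: sum_distrib_right sum.swap[of _ S])
  also have "\<dots> = (\<Sum>x\<in>S. (f x * B) $$ (i,j))"
    apply (intro sum.cong refl) subgoal for x using f[of x] B i j
      by (simp add: times_mat_def scalar_prod_def row_def col_def lessThan_atLeast0) done
  finally show "(msum nr nc f S * B) $$ (i,j) = msum nr k (\<lambda>x. f x * B) S $$ (i,j)" using i j by simp
qed (use B in auto)

lemma msum_reindex:
  assumes "bij_betw h S T"
  shows "msum nr nc f T = msum nr nc (\<lambda>x. f (h x)) S"
  unfolding msum_def by (intro cong_mat) (auto simp: sum.reindex_bij_betw[OF assms, symmetric])

lemma msum_cong: "(\<And>x. x \<in> S \<Longrightarrow> f x = g x) \<Longrightarrow> msum nr nc f S = msum nr nc g S"
  unfolding msum_def by (intro cong_mat) auto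

lemma mat_trace_msum: assumes "\<And>x. x \<in> S \<Longrightarrow> f x \<in> carrier_mat n n"
  shows "mat_trace (msum n n f S) = (\<Sum>x\<in>S. mat_trace (f x))"
proof -
  have "mat_trace (msum n n f S) = (\<Sum>i<n. \<Sum>x\<in>S. f x $$ (i,i))" unfolding mat_trace_def by simp
  also have "\<dots> = (\<Sum>x\<in>S. \<Sum>i<n. f x $$ (i,i))" by (rule sum.swap)
  finally show ?thesis unfolding mat_trace_def using assms by (auto intro!: sum.cong)
qed

lemma mat_trace_comm: assumes A: "A \<in> carrier_mat n m" and B: "B \<in> carrier_mat m n"
  shows "mat_trace (A * B) = mat_trace (B * A)"
proof -
  have "mat_trace (A * B) = (\<Sum>i<n. \<Sum>l<m. A $$ (i,l) * B $$ (l,i))"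
    unfolding mat_trace_def using A B by (auto simp: scalar_prod_def lessThan_atLeast0 intro!: sum.cong)
  also have "\<dots> = (\<Sum>l<m. \<Sum>i<n. B $$ (l,i) * A $$ (i,l))"
    by (subst sum.swap) (simp add: mult.commute)
  also have "\<dots> = mat_trace (B * A)"
    unfolding mat_trace_def using A B by (auto simp: scalar_prod_def lessThan_atLeast0 intro!: sum.cong)
  finally show ?thesis .
qed

lemma mat_trace_similar: assumes A: "A \<in> carrier_mat n n" and P: "P \<in> carrier_mat n n"
  and Q: "Q \<in> carrier_mat n n" and QP: "Q * P = 1\<^sub>m n"
  shows "mat_trace (P * A * Q) = mat_trace A"
proof -
  have "mat_trace (P * A * Q) = mat_trace (P * (A * Q))" using A P Q by (simp add: assoc_mult_mat)
  also have "\<dots> = mat_trace ((A * Q) * P)" using A P Q by (intro mat_trace_comm) auto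
  also have "(A * Q) * P = A" using A P Q QP by (simp add: assoc_mult_mat)
  finally show ?thesis .
qed

lemma mat_trace_one[simp]: "mat_trace (1\<^sub>m n) = of_nat n"
  unfolding mat_trace_def by simp

lemma mat_trace_smult: "A \<in> carrier_mat n n \<Longrightarrow> mat_trace (c \<cdot>\<^sub>m A) = c * mat_trace A"
  unfolding mat_trace_def by (auto simp add: sum_distrib_left intro!: sum.cong)

lemma rep_carrier: "is_rep G n \<rho> \<Longrightarrow> g \<in> carrier G \<Longrightarrow> \<rho> g \<in> carrier_mat n n"
  unfolding is_rep_def by auto

lemma rep_mult: "is_rep G n \<rho> \<Longrightarrow> g \<in> carrier G \<Longrightarrow> h \<in> carrier G \<Longrightarrow> \<rho> (g \<otimes>\<^bsub>G\<^esub> h) = \<rho> g * \<rho> h"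
  unfolding is_rep_def by auto

lemma rep_one: "is_rep G n \<rho> \<Longrightarrow> \<rho> \<one>\<^bsub>G\<^esub> = 1\<^sub>m n"
  unfolding is_rep_def by auto

lemma rep_pos: "is_rep G n \<rho> \<Longrightarrow> 0 < n"
  unfolding is_rep_def by auto

lemma character_in: "g \<in> carrier G \<Longrightarrow> character G \<rho> g = mat_trace (\<rho> g)"
  unfolding character_def by auto

lemma character_out: "g \<notin> carrier G \<Longrightarrow> character G \<rho> g = 0"
  unfolding character_def by auto


context group begin

lemma rep_inv:
  assumes r: "is_rep G n \<rho>" and g: "g \<in> carrier G"
  shows "\<rho> (inv g) * \<rho> g = 1\<^sub>m n" "\<rho> g * \<rho> (inv g) = 1\<^sub>m n"
proof -
  show "\<rho> (inv g) * \<rho> g = 1\<^sub>m n" using rep_mult[OF r, of "inv g" g] g rep_one[OF r] by simp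
  show "\<rho> g * \<rho> (inv g) = 1\<^sub>m n" using rep_mult[OF r, of g "inv g"] g rep_one[OF r] by simp
qed

lemma character_one:
  assumes r: "is_rep G n \<rho>"
  shows "character G \<rho> \<one> = of_nat n"
  using rep_one[OF r] by (simp add: character_in)

lemma character_conj:
  assumes r: "is_rep G n \<rho>" and x: "x \<in> carrier G" and g: "g \<in> carrier G"
  shows "character G \<rho> (x \<otimes> g \<otimes> inv x) = character G \<rho> g"
proof -
  have "\<rho> (x \<otimes> g \<otimes> inv x) = \<rho> x * \<rho> g * \<rho> (inv x)"
    using x g by (simp add: rep_mult[OF r])
  moreover have "mat_trace (\<rho> x * \<rho> g * \<rho> (inv x)) = mat_trace (\<rho> g)"
    by (rule mat_trace_similar[of _ n]) (use x g rep_carrier[OF r] rep_inv[OF r x] in auto)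
  ultimately show ?thesis using x g by (simp add: character_in)
qed

end

lemma mat_vec_unit_index: assumes A: "(A :: complex mat) \<in> carrier_mat nr nc" and i: "i < nr" and j: "j < nc"
  shows "(A *\<^sub>v unit_vec nc j) $ i = A $$ (i,j)"
  using A i j by simp

lemma mat_eq_by_vec: assumes A: "(A :: complex mat) \<in> carrier_mat nr nc" and B: "B \<in> carrier_mat nr nc"
  and eq: "\<And>v. v \<in> carrier_vec nc \<Longrightarrow> A *\<^sub>v v = B *\<^sub>v v"
  shows "A = B"
proof (rule eq_matI)
  fix i j assume "i < dim_row B" "j < dim_col B"
  hence i: "i < nr" and j: "j < nc" using B by auto
  have "A $$ (i,j) = (A *\<^sub>v unit_vec nc j) $ i" using A i j by simp
  also have "\<dots> = (B *\<^sub>v unit_vec nc j) $ i" using eq[of "unit_vec nc j"] j by simp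
  also have "\<dots> = B $$ (i,j)" using B i j by simp
  finally show "A $$ (i,j) = B $$ (i,j)" .
qed (use A B in auto)

lemma complex_mat_has_eigenvector:
  assumes T: "(T :: complex mat) \<in> carrier_mat n n" and n: "0 < n"
  shows "\<exists>a v. v \<in> carrier_vec n \<and> v \<noteq> 0\<^sub>v n \<and> T *\<^sub>v v = a \<cdot>\<^sub>v v"
proof -
  obtain as where cp: "char_poly T = (\<Prod>a\<leftarrow>as. [:- a, 1:])" and len: "length as = n"
    using char_poly_factorized[OF T] by blast
  then obtain a rest where as: "as = a # rest" using n by (cases as) auto
  have "poly (char_poly T) a = 0" unfolding cp as by simp
  hence "eigenvalue T a" using eigenvalue_root_char_poly[OF T] by simp
  then obtain v where "eigenvector T v a" unfolding eigenvalue_def by blast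
  thus ?thesis unfolding eigenvector_def using T by auto
qed

lemma schur_scalar:
  assumes irr: "is_irr_rep G n \<rho>" and T: "T \<in> carrier_mat n n"
    and comm: "\<And>g. g \<in> carrier G \<Longrightarrow> T * \<rho> g = \<rho> g * T"
  shows "\<exists>c. T = c \<cdot>\<^sub>m 1\<^sub>m n"
proof -
  have r: "is_rep G n \<rho>" using irr unfolding is_irr_rep_def by auto
  have n: "0 < n" using rep_pos[OF r] .
  obtain a v where v: "v \<in> carrier_vec n" "v \<noteq> 0\<^sub>v n" "T *\<^sub>v v = a \<cdot>\<^sub>v v"
    using complex_mat_has_eigenvector[OF T n] by blast
  define W where "W = {u \<in> carrier_vec n. T *\<^sub>v u = a \<cdot>\<^sub>v u}"
  have sub: "is_subspace_vec n W"
    unfolding is_subspace_vec_def W_def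
  proof (intro conjI ballI allI)
    fix u w assume u: "u \<in> {u \<in> carrier_vec n. T *\<^sub>v u = a \<cdot>\<^sub>v u}" and w: "w \<in> {u \<in> carrier_vec n. T *\<^sub>v u = a \<cdot>\<^sub>v u}"
    thus "u + w \<in> {u \<in> carrier_vec n. T *\<^sub>v u = a \<cdot>\<^sub>v u}"
      using T by (auto simp: mult_add_distrib_mat_vec[OF T] smult_add_distrib_vec)
  next
    fix c u assume u: "u \<in> {u \<in> carrier_vec n. T *\<^sub>v u = a \<cdot>\<^sub>v u}"
    thus "c \<cdot>\<^sub>v u \<in> {u \<in> carrier_vec n. T *\<^sub>v u = a \<cdot>\<^sub>v u}"
      using T by (auto simp: mult_mat_vec[OF T] smult_smult_assoc mult.commute)
  qed (use T in auto)
  have inv: "\<forall>g\<in>carrier G. \<forall>u\<in>W. \<rho> g *\<^sub>v u \<in> W"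
  proof (intro ballI)
    fix g u assume g: "g \<in> carrier G" and u: "u \<in> W"
    have rg: "\<rho> g \<in> carrier_mat n n" using rep_carrier[OF r g] .
    have uc: "u \<in> carrier_vec n" and Tu: "T *\<^sub>v u = a \<cdot>\<^sub>v u" using u unfolding W_def by auto
    have "T *\<^sub>v (\<rho> g *\<^sub>v u) = (T * \<rho> g) *\<^sub>v u" using T rg uc by simp
    also have "\<dots> = (\<rho> g * T) *\<^sub>v u" using comm[OF g] by simp
    also have "\<dots> = \<rho> g *\<^sub>v (a \<cdot>\<^sub>v u)" using T rg uc Tu by simp
    also have "\<dots> = a \<cdot>\<^sub>v (\<rho> g *\<^sub>v u)" using mult_mat_vec[OF rg uc] .
    finally show "\<rho> g *\<^sub>v u \<in> W" unfolding W_def using rg uc by auto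
  qed
  have "W = {0\<^sub>v n} \<or> W = carrier_vec n" using irr sub inv unfolding is_irr_rep_def by blast
  moreover have "v \<in> W" using v unfolding W_def by auto
  ultimately have Wall: "W = carrier_vec n" using v by auto
  have "T = a \<cdot>\<^sub>m 1\<^sub>m n"
  proof (rule eq_matI)
    fix i j assume "i < dim_row (a \<cdot>\<^sub>m 1\<^sub>m n)" "j < dim_col (a \<cdot>\<^sub>m 1\<^sub>m n)"
    hence i: "i < n" and j: "j < n" by auto
    have "unit_vec n j \<in> W" using Wall j by auto
    hence "T *\<^sub>v unit_vec n j = a \<cdot>\<^sub>v unit_vec n j" unfolding W_def by auto
    hence "(T *\<^sub>v unit_vec n j) $ i = (a \<cdot>\<^sub>v unit_vec n j) $ i" by simp
    thus "T $$ (i,j) = (a \<cdot>\<^sub>m 1\<^sub>m n) $$ (i,j)" using T i j by simp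
  qed (use T in auto)
  thus ?thesis by blast
qed

lemma injective_dim:
  assumes T: "(T :: complex mat) \<in> carrier_mat m n"
    and inj: "\<And>v. v \<in> carrier_vec n \<Longrightarrow> T *\<^sub>v v = 0\<^sub>v m \<Longrightarrow> v = 0\<^sub>v n"
  shows "n \<le> m"
proof (rule ccontr)
  assume "\<not> n \<le> m" hence mn: "m < n" by simp
  define c where "c = (\<lambda>i. if i < m then row T i else 0\<^sub>v n)"
  define T' where "T' = mat\<^sub>r n n (\<lambda>i. if i = n - 1 then 0\<^sub>v n else c i)"
  have cc: "c \<in> {0..<n} \<rightarrow> carrier_vec n" unfolding c_def using T by auto
  have "det T' = 0" unfolding T'_def by (rule det_row_0[OF _ cc]) (use mn in auto)
  moreover have T'c: "T' \<in> carrier_mat n n" unfolding T'_def by auto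
  ultimately obtain v where v: "v \<in> carrier_vec n" "v \<noteq> 0\<^sub>v n" "T' *\<^sub>v v = 0\<^sub>v n"
    using det_0_iff_vec_prod_zero[OF T'c] by blast
  have "T *\<^sub>v v = 0\<^sub>v m"
  proof (rule eq_vecI)
    fix i assume "i < dim_vec (0\<^sub>v m :: complex vec)" hence i: "i < m" by simp
    have "(T' *\<^sub>v v) $ i = row T' i \<bullet> v" using i mn T'c by simp
    also have "row T' i = row T i" using i mn T unfolding T'_def c_def
      by (auto simp: mat_of_rows_def intro!: eq_vecI)
    finally show "(T *\<^sub>v v) $ i = 0\<^sub>v m $ i" using v(3) i mn T by simp
  qed (use T in auto)
  with inj v show False by auto
qed

lemma injective_square_inverse:
  assumes T: "(T :: complex mat) \<in> carrier_mat n n"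
    and inj: "\<And>v. v \<in> carrier_vec n \<Longrightarrow> T *\<^sub>v v = 0\<^sub>v n \<Longrightarrow> v = 0\<^sub>v n"
  shows "\<exists>S. S \<in> carrier_mat n n \<and> S * T = 1\<^sub>m n \<and> T * S = 1\<^sub>m n"
proof -
  have "det T \<noteq> 0" using det_0_iff_vec_prod_zero[OF T] inj by blast
  from det_non_zero_imp_unit[OF T this, of "()"]
  show ?thesis unfolding Units_def ring_mat_def by auto
qed

lemma intertwiner_injective:
  assumes irr: "is_irr_rep G n \<rho>" and T: "T \<in> carrier_mat m n" and nz: "T \<noteq> 0\<^sub>m m n"
    and comm: "\<And>g. g \<in> carrier G \<Longrightarrow> T * \<rho> g = \<sigma> g * T"
    and sig: "\<And>g. g \<in> carrier G \<Longrightarrow> \<sigma> g \<in> carrier_mat m m"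
  shows "\<And>v. v \<in> carrier_vec n \<Longrightarrow> T *\<^sub>v v = 0\<^sub>v m \<Longrightarrow> v = 0\<^sub>v n"
proof -
  have r: "is_rep G n \<rho>" using irr unfolding is_irr_rep_def by auto
  define K where "K = {v \<in> carrier_vec n. T *\<^sub>v v = 0\<^sub>v m}"
  have sub: "is_subspace_vec n K"
    unfolding is_subspace_vec_def K_def
  proof (intro conjI ballI allI)
    fix u w assume u: "u \<in> {v \<in> carrier_vec n. T *\<^sub>v v = 0\<^sub>v m}" and w: "w \<in> {v \<in> carrier_vec n. T *\<^sub>v v = 0\<^sub>v m}"
    thus "u + w \<in> {v \<in> carrier_vec n. T *\<^sub>v v = 0\<^sub>v m}"
      using T by (auto simp: mult_add_distrib_mat_vec[OF T])
  next
    fix c u assume u: "u \<in> {v \<in> carrier_vec n. T *\<^sub>v v = 0\<^sub>v m}"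
    thus "c \<cdot>\<^sub>v u \<in> {v \<in> carrier_vec n. T *\<^sub>v v = 0\<^sub>v m}"
      using T by (auto simp: mult_mat_vec[OF T])
  qed (use T in auto)
  have inv: "\<forall>g\<in>carrier G. \<forall>u\<in>K. \<rho> g *\<^sub>v u \<in> K"
  proof (intro ballI)
    fix g u assume g: "g \<in> carrier G" and u: "u \<in> K"
    have rg: "\<rho> g \<in> carrier_mat n n" using rep_carrier[OF r g] .
    have uc: "u \<in> carrier_vec n" and Tu: "T *\<^sub>v u = 0\<^sub>v m" using u unfolding K_def by auto
    have "T *\<^sub>v (\<rho> g *\<^sub>v u) = (T * \<rho> g) *\<^sub>v u" using T rg uc by simp
    also have "\<dots> = (\<sigma> g * T) *\<^sub>v u" using comm[OF g] by simp
    also have "\<dots> = \<sigma> g *\<^sub>v 0\<^sub>v m" using T sig[OF g] uc Tu by simp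
    also have "\<dots> = 0\<^sub>v m" using sig[OF g] by (auto intro!: eq_vecI simp: scalar_prod_def)
    finally show "\<rho> g *\<^sub>v u \<in> K" unfolding K_def using rg uc by auto
  qed
  have "K = {0\<^sub>v n} \<or> K = carrier_vec n" using irr sub inv unfolding is_irr_rep_def by blast
  moreover have "K \<noteq> carrier_vec n"
  proof
    assume Kall: "K = carrier_vec n"
    have "T = 0\<^sub>m m n"
    proof (rule mat_eq_by_vec[OF T])
      fix v :: "complex vec" assume v: "v \<in> carrier_vec n"
      hence "T *\<^sub>v v = 0\<^sub>v m" using Kall unfolding K_def by auto
      also have "\<dots> = 0\<^sub>m m n *\<^sub>v v" using v by (auto intro!: eq_vecI simp: scalar_prod_def)
      finally show "T *\<^sub>v v = 0\<^sub>m m n *\<^sub>v v" .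
    qed auto
    with nz show False by simp
  qed
  ultimately have K0: "K = {0\<^sub>v n}" by simp
  fix v assume "v \<in> carrier_vec n" "T *\<^sub>v v = 0\<^sub>v m"
  hence "v \<in> K" unfolding K_def by auto
  thus "v = 0\<^sub>v n" using K0 by simp
qed

definition Emat :: "nat \<Rightarrow> nat \<Rightarrow> nat \<Rightarrow> nat \<Rightarrow> complex mat" where
  "Emat m n j k = mat m n (\<lambda>(a,b). if a = j \<and> b = k then 1 else 0)"

lemma Emat_carrier[simp]: "Emat m n j k \<in> carrier_mat m n" unfolding Emat_def by auto
lemma Emat_dims[simp]: "dim_row (Emat m n j k) = m" "dim_col (Emat m n j k) = n" unfolding Emat_def by auto

lemma Emat_entry:
  assumes S: "S \<in> carrier_mat m m" and R: "R \<in> carrier_mat n n" and j: "j < m" and k: "k < n"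
  shows "(S * Emat m n j k * R) $$ (j,k) = S $$ (j,j) * R $$ (k,k)"
proof -
  have SE: "(S * Emat m n j k) $$ (j,b) = (if b = k then S $$ (j,j) else 0)" if b: "b < n" for b
  proof -
    have "(S * Emat m n j k) $$ (j,b) = (\<Sum>a\<in>{0..<m}. S $$ (j,a) * (if a = j \<and> b = k then 1 else 0))"
      using S j b by (simp add: Emat_def scalar_prod_def)
    also have "\<dots> = (\<Sum>a\<in>{0..<m}. if a = j then (if b = k then S $$ (j,j) else 0) else 0)"
      by (intro sum.cong) auto
    also have "\<dots> = (if b = k then S $$ (j,j) else 0)" using j by simp
    finally show ?thesis .
  qed
  have "(S * Emat m n j k * R) $$ (j,k) = (\<Sum>b\<in>{0..<n}. (S * Emat m n j k) $$ (j,b) * R $$ (b,k))"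
    using S R j k by (auto simp: scalar_prod_def intro!: sum.cong)
  also have "\<dots> = (\<Sum>b\<in>{0..<n}. if b = k then S $$ (j,j) * R $$ (k,k) else 0)"
    by (intro sum.cong) (auto simp: SE)
  also have "\<dots> = S $$ (j,j) * R $$ (k,k)" using k by simp
  finally show ?thesis .
qed

context group begin

lemma bij_lmult: "h \<in> carrier G \<Longrightarrow> bij_betw (\<lambda>g. h \<otimes> g) (carrier G) (carrier G)"
  by (rule bij_betw_byWitness[where f' = "\<lambda>g. inv h \<otimes> g"]) (auto simp: m_assoc[symmetric])

lemma bij_inv: "bij_betw (\<lambda>g. inv g) (carrier G) (carrier G)"
  by (rule bij_betw_byWitness[where f' = "\<lambda>g. inv g"]) auto

definition Tmat :: "('a \<Rightarrow> complex mat) \<Rightarrow> nat \<Rightarrow> ('a \<Rightarrow> complex mat) \<Rightarrow> nat \<Rightarrow> complex mat \<Rightarrow> complex mat" where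
  "Tmat \<sigma> m \<rho> n A = msum m n (\<lambda>g. \<sigma> g * A * \<rho> (inv g)) (carrier G)"

lemma Tmat_carrier[simp]: "Tmat \<sigma> m \<rho> n A \<in> carrier_mat m n"
  unfolding Tmat_def by simp

lemma Tmat_intertwines:
  assumes s: "is_rep G m \<sigma>" and r: "is_rep G n \<rho>" and A: "A \<in> carrier_mat m n" and h: "h \<in> carrier G"
  shows "Tmat \<sigma> m \<rho> n A * \<rho> h = \<sigma> h * Tmat \<sigma> m \<rho> n A"
proof -
  have c: "\<sigma> g * A * \<rho> (inv g) \<in> carrier_mat m n" if g: "g \<in> carrier G" for g
  proof -
    have "\<sigma> g \<in> carrier_mat m m" "\<rho> (inv g) \<in> carrier_mat n n"
      using rep_carrier[OF s g] rep_carrier[OF r, of "inv g"] g by auto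
    thus ?thesis using A by (intro mult_carrier_mat) auto
  qed
  have "\<sigma> h * Tmat \<sigma> m \<rho> n A = msum m n (\<lambda>g. \<sigma> h * (\<sigma> g * A * \<rho> (inv g))) (carrier G)"
    unfolding Tmat_def by (rule mult_msum_left[OF rep_carrier[OF s h] c])
  also have "\<dots> = msum m n (\<lambda>g. \<sigma> (h \<otimes> g) * A * \<rho> (inv g)) (carrier G)"
  proof (rule msum_cong)
    fix g assume g: "g \<in> carrier G"
    have sh: "\<sigma> h \<in> carrier_mat m m" and sg: "\<sigma> g \<in> carrier_mat m m" and ri: "\<rho> (inv g) \<in> carrier_mat n n"
      using rep_carrier[OF s h] rep_carrier[OF s g] rep_carrier[OF r] g by auto
    have "\<sigma> h * (\<sigma> g * A * \<rho> (inv g)) = (\<sigma> h * \<sigma> g) * A * \<rho> (inv g)"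
      using sh sg ri A by (simp add: assoc_mult_mat[of _ m m _ n _ n])
    thus "\<sigma> h * (\<sigma> g * A * \<rho> (inv g)) = \<sigma> (h \<otimes> g) * A * \<rho> (inv g)"
      using rep_mult[OF s h g] by simp
  qed
  also have "\<dots> = msum m n (\<lambda>g. \<sigma> g * A * \<rho> (inv g) * \<rho> h) (carrier G)"
  proof -
    have "msum m n (\<lambda>g. \<sigma> g * A * \<rho> (inv g) * \<rho> h) (carrier G)
        = msum m n (\<lambda>g. \<sigma> (h \<otimes> g) * A * \<rho> (inv (h \<otimes> g)) * \<rho> h) (carrier G)"
      by (rule msum_reindex[OF bij_lmult[OF h]])
    also have "\<dots> = msum m n (\<lambda>g. \<sigma> (h \<otimes> g) * A * \<rho> (inv g)) (carrier G)"
    proof (rule msum_cong)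
      fix g assume g: "g \<in> carrier G"
      have hg: "h \<otimes> g \<in> carrier G" using h g by simp
      have e: "inv (h \<otimes> g) \<otimes> h = inv g" using h g by (simp add: inv_mult_group m_assoc)
      have "\<sigma> (h \<otimes> g) * A * \<rho> (inv (h \<otimes> g)) * \<rho> h = \<sigma> (h \<otimes> g) * A * (\<rho> (inv (h \<otimes> g)) * \<rho> h)"
        using rep_carrier[OF s hg] A rep_carrier[OF r] hg h by (simp add: assoc_mult_mat[of _ m n _ n _ n])
      also have "\<rho> (inv (h \<otimes> g)) * \<rho> h = \<rho> (inv g)"
        using rep_mult[OF r, of "inv (h \<otimes> g)" h] hg h e by simp
      finally show "\<sigma> (h \<otimes> g) * A * \<rho> (inv (h \<otimes> g)) * \<rho> h = \<sigma> (h \<otimes> g) * A * \<rho> (inv g)" .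
    qed
    finally show ?thesis by simp
  qed
  also have "\<dots> = Tmat \<sigma> m \<rho> n A * \<rho> h"
    unfolding Tmat_def by (rule mult_msum_right[OF rep_carrier[OF r h] c, symmetric])
  finally show ?thesis by simp
qed

lemma Tmat_entries_sum:
  assumes s: "is_rep G m \<sigma>" and r: "is_rep G n \<rho>"
  shows "(\<Sum>g\<in>carrier G. character G \<sigma> g * character G \<rho> (inv g))
       = (\<Sum>j<m. \<Sum>k<n. Tmat \<sigma> m \<rho> n (Emat m n j k) $$ (j,k))"
proof -
  have "(\<Sum>j<m. \<Sum>k<n. Tmat \<sigma> m \<rho> n (Emat m n j k) $$ (j,k))
      = (\<Sum>j<m. \<Sum>k<n. \<Sum>g\<in>carrier G. \<sigma> g $$ (j,j) * \<rho> (inv g) $$ (k,k))"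
  proof (intro sum.cong refl)
    fix j k assume j: "j \<in> {..<m}" and k: "k \<in> {..<n}"
    have "Tmat \<sigma> m \<rho> n (Emat m n j k) $$ (j,k) = (\<Sum>g\<in>carrier G. (\<sigma> g * Emat m n j k * \<rho> (inv g)) $$ (j,k))"
      unfolding Tmat_def using j k by simp
    also have "\<dots> = (\<Sum>g\<in>carrier G. \<sigma> g $$ (j,j) * \<rho> (inv g) $$ (k,k))"
    proof (rule sum.cong[OF refl])
      fix g assume g: "g \<in> carrier G"
      show "(\<sigma> g * Emat m n j k * \<rho> (inv g)) $$ (j,k) = \<sigma> g $$ (j,j) * \<rho> (inv g) $$ (k,k)"
        by (rule Emat_entry) (use rep_carrier[OF s g] rep_carrier[OF r, of "inv g"] g j k in auto)
    qed
    finally show "Tmat \<sigma> m \<rho> n (Emat m n j k) $$ (j,k) = (\<Sum>g\<in>carrier G. \<sigma> g $$ (j,j) * \<rho> (inv g) $$ (k,k))" .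
  qed
  also have "\<dots> = (\<Sum>g\<in>carrier G. \<Sum>j<m. \<Sum>k<n. \<sigma> g $$ (j,j) * \<rho> (inv g) $$ (k,k))"
  proof -
    have "(\<Sum>j<m. \<Sum>k<n. \<Sum>g\<in>carrier G. \<sigma> g $$ (j,j) * \<rho> (inv g) $$ (k,k))
        = (\<Sum>j<m. \<Sum>g\<in>carrier G. \<Sum>k<n. \<sigma> g $$ (j,j) * \<rho> (inv g) $$ (k,k))"
      by (intro sum.cong refl) (rule sum.swap)
    also have "\<dots> = (\<Sum>g\<in>carrier G. \<Sum>j<m. \<Sum>k<n. \<sigma> g $$ (j,j) * \<rho> (inv g) $$ (k,k))"
      by (rule sum.swap)
    finally show ?thesis .
  qed
  also have "\<dots> = (\<Sum>g\<in>carrier G. character G \<sigma> g * character G \<rho> (inv g))"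
  proof (rule sum.cong[OF refl])
    fix g assume g: "g \<in> carrier G"
    have "character G \<sigma> g * character G \<rho> (inv g) = (\<Sum>j<m. \<sigma> g $$ (j,j)) * (\<Sum>k<n. \<rho> (inv g) $$ (k,k))"
      using g rep_carrier[OF s g] rep_carrier[OF r, of "inv g"] by (simp add: character_in mat_trace_def)
    thus "(\<Sum>j<m. \<Sum>k<n. \<sigma> g $$ (j,j) * \<rho> (inv g) $$ (k,k)) = character G \<sigma> g * character G \<rho> (inv g)"
      by (simp add: sum_product)
  qed
  finally show ?thesis by simp
qed

end

context group begin

lemma sum_inv_swap: fixes f h :: "'a \<Rightarrow> complex" shows "(\<Sum>g\<in>carrier G. f g * h (inv g)) = (\<Sum>g\<in>carrier G. h g * f (inv g))"
proof -
  have "(\<Sum>g\<in>carrier G. h g * f (inv g)) = (\<Sum>g\<in>carrier G. h (inv g) * f (inv (inv g)))"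
    by (rule sum.reindex_bij_betw[OF bij_inv, symmetric])
  also have "\<dots> = (\<Sum>g\<in>carrier G. f g * h (inv g))" by (intro sum.cong refl) (simp add: ac_simps)
  finally show ?thesis by simp
qed

lemma sum_nonzero_intertwiner:
  assumes irr: "is_irr_rep G n \<rho>" and s: "is_rep G m \<sigma>"
    and nz: "(\<Sum>g\<in>carrier G. character G \<sigma> g * character G \<rho> (inv g)) \<noteq> 0"
  shows "n \<le> m \<and> (\<exists>T \<in> carrier_mat m n. (\<forall>v\<in>carrier_vec n. T *\<^sub>v v = 0\<^sub>v m \<longrightarrow> v = 0\<^sub>v n)
            \<and> (\<forall>h\<in>carrier G. T * \<rho> h = \<sigma> h * T))"
proof -
  have r: "is_rep G n \<rho>" using irr unfolding is_irr_rep_def by auto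
  have "(\<Sum>j<m. \<Sum>k<n. Tmat \<sigma> m \<rho> n (Emat m n j k) $$ (j,k)) \<noteq> 0"
    using nz Tmat_entries_sum[OF s r] by metis
  then obtain j where j: "j < m" and e1: "(\<Sum>k<n. Tmat \<sigma> m \<rho> n (Emat m n j k) $$ (j,k)) \<noteq> 0"
    using sum.not_neutral_contains_not_neutral by blast
  then obtain k where k: "k < n" and e: "Tmat \<sigma> m \<rho> n (Emat m n j k) $$ (j,k) \<noteq> 0"
    using sum.not_neutral_contains_not_neutral by blast
  define T where "T = Tmat \<sigma> m \<rho> n (Emat m n j k)"
  have Tc: "T \<in> carrier_mat m n" unfolding T_def by simp
  have Tnz: "T \<noteq> 0\<^sub>m m n" using e j k unfolding T_def by auto
  have comm: "\<And>h. h \<in> carrier G \<Longrightarrow> T * \<rho> h = \<sigma> h * T"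
    unfolding T_def by (rule Tmat_intertwines[OF s r]) auto
  have inj: "\<And>v. v \<in> carrier_vec n \<Longrightarrow> T *\<^sub>v v = 0\<^sub>v m \<Longrightarrow> v = 0\<^sub>v n"
    by (rule intertwiner_injective[OF irr Tc Tnz comm]) (use rep_carrier[OF s] in auto)
  have "n \<le> m" by (rule injective_dim[OF Tc inj])
  thus ?thesis using Tc inj comm by blast
qed

lemma orth_diff:
  assumes irr1: "is_irr_rep G n \<rho>" and irr2: "is_irr_rep G m \<sigma>"
    and ne: "character G \<rho> \<noteq> character G \<sigma>"
  shows "(\<Sum>g\<in>carrier G. character G \<sigma> g * character G \<rho> (inv g)) = 0"
proof (rule ccontr)
  assume nz: "(\<Sum>g\<in>carrier G. character G \<sigma> g * character G \<rho> (inv g)) \<noteq> 0"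
  have r: "is_rep G n \<rho>" using irr1 unfolding is_irr_rep_def by auto
  have s: "is_rep G m \<sigma>" using irr2 unfolding is_irr_rep_def by auto
  from sum_nonzero_intertwiner[OF irr1 s nz] obtain T where nm: "n \<le> m" and Tc: "T \<in> carrier_mat m n"
    and inj: "\<forall>v\<in>carrier_vec n. T *\<^sub>v v = 0\<^sub>v m \<longrightarrow> v = 0\<^sub>v n"
    and comm: "\<forall>h\<in>carrier G. T * \<rho> h = \<sigma> h * T" by blast
  have nz2: "(\<Sum>g\<in>carrier G. character G \<rho> g * character G \<sigma> (inv g)) \<noteq> 0"
    using nz sum_inv_swap[of "character G \<sigma>" "character G \<rho>"] by simp
  from sum_nonzero_intertwiner[OF irr2 r nz2] have mn: "m \<le> n" by blast
  have eq: "m = n" using nm mn by simp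
  have Tc'': "T \<in> carrier_mat n n" using Tc eq by simp
  have inj': "\<And>v. v \<in> carrier_vec n \<Longrightarrow> T *\<^sub>v v = 0\<^sub>v n \<Longrightarrow> v = 0\<^sub>v n" using inj eq by auto
  obtain S where Sc: "S \<in> carrier_mat n n" and ST: "S * T = 1\<^sub>m n" and TS: "T * S = 1\<^sub>m n"
    using injective_square_inverse[OF Tc'' inj'] by blast
  have "character G \<rho> g = character G \<sigma> g" for g
  proof (cases "g \<in> carrier G")
    case True
    have rg: "\<rho> g \<in> carrier_mat n n" using rep_carrier[OF r True] .
    have sg: "\<sigma> g \<in> carrier_mat n n" using rep_carrier[OF s True] eq by simp
    have Tc': "T \<in> carrier_mat n n" using Tc eq by simp
    have "T * \<rho> g * S = \<sigma> g * T * S" using comm True by simp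
    also have "\<dots> = \<sigma> g * (T * S)" using sg Tc' Sc by (simp add: assoc_mult_mat)
    also have "\<dots> = \<sigma> g" using TS sg by simp
    finally have "\<sigma> g = T * \<rho> g * S" by simp
    hence "mat_trace (\<sigma> g) = mat_trace (\<rho> g)"
      using mat_trace_similar[OF rg Tc' Sc ST] by simp
    thus ?thesis using True by (simp add: character_in)
  next
    case False thus ?thesis by (simp add: character_out)
  qed
  with ne show False by blast
qed

lemma mat_trace_Emat: "j < n \<Longrightarrow> k < n \<Longrightarrow> mat_trace (Emat n n j k) = (if j = k then 1 else 0)"
  unfolding mat_trace_def Emat_def by (auto simp: sum.delta)

lemma orth_same:
  assumes irr: "is_irr_rep G n \<rho>"
  shows "(\<Sum>g\<in>carrier G. character G \<rho> g * character G \<rho> (inv g)) = of_nat (card (carrier G))"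
proof -
  have r: "is_rep G n \<rho>" using irr unfolding is_irr_rep_def by auto
  have n: "0 < n" using rep_pos[OF r] .
  have entry: "Tmat \<rho> n \<rho> n (Emat n n j k) $$ (j,k) = (if j = k then of_nat (card (carrier G)) / of_nat n else 0)"
    if j: "j < n" and k: "k < n" for j k
  proof -
    define T where "T = Tmat \<rho> n \<rho> n (Emat n n j k)"
    have Tc: "T \<in> carrier_mat n n" unfolding T_def by simp
    have comm: "\<And>g. g \<in> carrier G \<Longrightarrow> T * \<rho> g = \<rho> g * T"
      unfolding T_def by (rule Tmat_intertwines[OF r r]) auto
    obtain c where c: "T = c \<cdot>\<^sub>m 1\<^sub>m n"
      using schur_scalar[OF irr Tc comm] by blast
    have "mat_trace T = (\<Sum>g\<in>carrier G. mat_trace (\<rho> g * Emat n n j k * \<rho> (inv g)))"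
      unfolding T_def Tmat_def
      by (rule mat_trace_msum) (use rep_carrier[OF r] in \<open>auto intro!: mult_carrier_mat\<close>)
    also have "\<dots> = (\<Sum>g\<in>carrier G. mat_trace (Emat n n j k))"
      by (rule sum.cong[OF refl], rule mat_trace_similar)
         (use rep_carrier[OF r] rep_inv[OF r] in auto)
    also have "\<dots> = of_nat (card (carrier G)) * (if j = k then 1 else 0)"
      using mat_trace_Emat[OF j k] by simp
    finally have tr: "mat_trace T = of_nat (card (carrier G)) * (if j = k then 1 else 0)" .
    have "mat_trace T = c * of_nat n" using c by (simp add: mat_trace_smult[of _ n])
    with tr have cval: "c = of_nat (card (carrier G)) * (if j = k then 1 else 0) / of_nat n"
      using n by (simp add: field_simps)
    show ?thesis unfolding T_def[symmetric] c using j k cval by simp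
  qed
  have "(\<Sum>g\<in>carrier G. character G \<rho> g * character G \<rho> (inv g))
      = (\<Sum>j<n. \<Sum>k<n. Tmat \<rho> n \<rho> n (Emat n n j k) $$ (j,k))"
    by (rule Tmat_entries_sum[OF r r])
  also have "\<dots> = (\<Sum>j<n. of_nat (card (carrier G)) / of_nat n)"
    by (intro sum.cong refl) (simp add: entry sum.delta)
  also have "\<dots> = of_nat (card (carrier G))" using n by simp
  finally show ?thesis .
qed

end

lemma upper_tri_mult:
  assumes B: "(B :: complex mat) \<in> carrier_mat n n" and C: "C \<in> carrier_mat n n"
    and uB: "upper_triangular B" and uC: "upper_triangular C"
  shows "upper_triangular (B * C) \<and> (\<forall>i<n. (B * C) $$ (i,i) = B $$ (i,i) * C $$ (i,i))"
proof (intro conjI allI impI)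
  have zB: "B $$ (i,j) = 0" if "i < n" "j < i" for i j using uB B that unfolding upper_triangular_def by auto
  have zC: "C $$ (i,j) = 0" if "i < n" "j < i" for i j using uC C that unfolding upper_triangular_def by auto
  show "upper_triangular (B * C)"
  proof (rule upper_triangularI)
    fix i j assume j: "j < i" and i: "i < dim_row (B * C)"
    hence i': "i < n" using B by simp
    have "(B * C) $$ (i,j) = (\<Sum>l\<in>{0..<n}. B $$ (i,l) * C $$ (l,j))"
      using B C i' j by (auto simp: scalar_prod_def intro!: sum.cong)
    also have "\<dots> = 0"
    proof (rule sum.neutral, intro ballI)
      fix l assume l: "l \<in> {0..<n}"
      show "B $$ (i,l) * C $$ (l,j) = 0"
      proof (cases "l < i")
        case True thus ?thesis using zB[OF i' True] by simp
      next
        case False hence "j < l" using j by simp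
        thus ?thesis using zC l by simp
      qed
    qed
    finally show "(B * C) $$ (i,j) = 0" .
  qed
  fix i assume i: "i < n"
  have "(B * C) $$ (i,i) = (\<Sum>l\<in>{0..<n}. B $$ (i,l) * C $$ (l,i))"
    using B C i by (auto simp: scalar_prod_def intro!: sum.cong)
  also have "\<dots> = (\<Sum>l\<in>{0..<n}. if l = i then B $$ (i,i) * C $$ (i,i) else 0)"
  proof (rule sum.cong[OF refl])
    fix l assume l: "l \<in> {0..<n}"
    show "B $$ (i,l) * C $$ (l,i) = (if l = i then B $$ (i,i) * C $$ (i,i) else 0)"
    proof (cases "l < i")
      case True thus ?thesis using zB[OF i True] by simp
    next
      case False thus ?thesis using zC[of l i] l by (cases "l = i") auto
    qed
  qed
  also have "\<dots> = B $$ (i,i) * C $$ (i,i)" using i by simp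
  finally show "(B * C) $$ (i,i) = B $$ (i,i) * C $$ (i,i)" .
qed

lemma upper_tri_pow:
  assumes B: "(B :: complex mat) \<in> carrier_mat n n" and uB: "upper_triangular B"
  shows "upper_triangular (B ^\<^sub>m k) \<and> (\<forall>i<n. (B ^\<^sub>m k) $$ (i,i) = (B $$ (i,i)) ^ k)"
proof (induction k)
  case 0 thus ?case using B by auto
next
  case (Suc k)
  have Bk: "B ^\<^sub>m k \<in> carrier_mat n n" using B by simp
  from upper_tri_mult[OF Bk B _ uB] Suc show ?case by (auto simp: mult.commute)
qed

context group begin

lemma rep_pow: assumes r: "is_rep G n \<rho>" and g: "g \<in> carrier G"
  shows "\<rho> (g [^] (k::nat)) = \<rho> g ^\<^sub>m k"
proof (induction k)
  case 0 thus ?case using rep_one[OF r] rep_carrier[OF r g] by simp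
next
  case (Suc k)
  have "\<rho> (g [^] Suc k) = \<rho> (g [^] k) * \<rho> g" using rep_mult[OF r, of "g [^] k" g] g by simp
  thus ?case using Suc by simp
qed

lemma character_inv_conj:
  assumes fin: "finite (carrier G)" and r: "is_rep G n \<rho>" and g: "g \<in> carrier G"
  shows "character G \<rho> (inv g) = cnj (character G \<rho> g) \<and> cmod (character G \<rho> g) \<le> of_nat n"
proof -
  define m where "m = Coset.order G"
  have m: "0 < m" unfolding m_def Coset.order_def using fin by (auto simp: card_gt_0_iff)
  have gm: "g [^] m = \<one>" unfolding m_def using pow_order_eq_1[OF g] .
  have invg: "inv g = g [^] (m - 1)"
  proof -
    have "g [^] (m - 1) \<otimes> g = g [^] m" using m by (metis Suc_diff_1 nat_pow_Suc)
    hence "g [^] (m - 1) \<otimes> g = \<one>" using gm by simp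
    thus ?thesis using g by (metis inv_equality nat_pow_closed)
  qed
  define A where "A = \<rho> g"
  have A: "A \<in> carrier_mat n n" unfolding A_def using rep_carrier[OF r g] .
  obtain es where cp: "char_poly A = (\<Prod>a\<leftarrow>es. [:- a, 1:])" and len: "length es = n"
    using char_poly_factorized[OF A] by blast
  obtain B P Q where sd: "schur_decomposition A es = (B,P,Q)" by (cases "schur_decomposition A es") auto
  from schur_decomposition[OF A cp sd] have sim: "similar_mat_wit A B P Q" and uB: "upper_triangular B"
    and dB: "diag_mat B = es" by auto
  have Bc: "B \<in> carrier_mat n n" and Pc: "P \<in> carrier_mat n n" and Qc: "Q \<in> carrier_mat n n"
    and PQ: "P * Q = 1\<^sub>m n" and QP: "Q * P = 1\<^sub>m n"
    using sim A unfolding similar_mat_wit_def Let_def by auto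
  have trpow: "mat_trace (A ^\<^sub>m k) = (\<Sum>i<n. (B $$ (i,i)) ^ k)" for k
  proof -
    have "A ^\<^sub>m k = P * B ^\<^sub>m k * Q" by (rule similar_mat_wit_pow_id[OF sim])
    hence "mat_trace (A ^\<^sub>m k) = mat_trace (B ^\<^sub>m k)"
      using mat_trace_similar[of "B ^\<^sub>m k" n P Q] Bc Pc Qc QP by simp
    also have "\<dots> = (\<Sum>i<n. (B $$ (i,i)) ^ k)"
      unfolding mat_trace_def using upper_tri_pow[OF Bc uB, of k] Bc by simp
    finally show ?thesis .
  qed
  have Bm: "B ^\<^sub>m m = 1\<^sub>m n"
  proof -
    have "A ^\<^sub>m m = 1\<^sub>m n" unfolding A_def using rep_pow[OF r g, of m] gm rep_one[OF r] by simp
    hence "Q * (A ^\<^sub>m m) * P = 1\<^sub>m n" using QP Qc by simp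
    moreover have "Q * (A ^\<^sub>m m) * P = B ^\<^sub>m m"
    proof -
      have "Q * (A ^\<^sub>m m) * P = Q * (P * B ^\<^sub>m m * Q) * P" using similar_mat_wit_pow_id[OF sim] by simp
      also have "\<dots> = Q * ((P * B ^\<^sub>m m * Q) * P)"
        by (rule assoc_mult_mat[OF Qc _ Pc]) (use Pc Qc Bc in auto)
      also have "(P * B ^\<^sub>m m * Q) * P = (P * B ^\<^sub>m m) * (Q * P)"
        by (rule assoc_mult_mat) (use Pc Qc Bc in auto)
      also have "\<dots> = P * B ^\<^sub>m m" using QP Pc Bc by simp
      also have "Q * (P * B ^\<^sub>m m) = (Q * P) * B ^\<^sub>m m"
        by (rule assoc_mult_mat[symmetric]) (use Pc Qc Bc in auto)
      also have "\<dots> = B ^\<^sub>m m" using QP Bc by simp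
      finally show ?thesis .
    qed
    ultimately show ?thesis by simp
  qed
  have bm: "(B $$ (i,i)) ^ m = 1" if i: "i < n" for i
    using upper_tri_pow[OF Bc uB, of m] i Bm by auto
  have nb: "cmod (B $$ (i,i)) = 1" if i: "i < n" for i
  proof -
    have "cmod (B $$ (i,i)) ^ m = 1" using bm[OF i] by (metis norm_one norm_power)
    thus ?thesis using m power_eq_imp_eq_base[of "cmod (B $$ (i,i))" m 1] by simp
  qed
  have binv: "(B $$ (i,i)) ^ (m - 1) = cnj (B $$ (i,i))" if i: "i < n" for i
  proof -
    let ?b = "B $$ (i,i)"
    have b0: "?b \<noteq> 0" using nb[OF i] by auto
    have "?b ^ (m - 1) * ?b = 1" using bm[OF i] m by (metis Suc_diff_1 power_Suc2)
    moreover have "cnj ?b * ?b = 1" using nb[OF i] by (metis complex_norm_square mult.commute of_real_1 power_one complex_mult_cnj[symmetric] norm_of_real) 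
    ultimately show ?thesis using b0 by (metis mult_right_cancel)
  qed
  have "character G \<rho> (inv g) = mat_trace (A ^\<^sub>m (m - 1))"
    using invg rep_pow[OF r g] g unfolding A_def by (simp add: character_in)
  also have "\<dots> = (\<Sum>i<n. cnj (B $$ (i,i)))" unfolding trpow by (intro sum.cong refl) (metis binv lessThan_iff)
  also have "\<dots> = cnj (\<Sum>i<n. B $$ (i,i))" by simp
  also have "(\<Sum>i<n. B $$ (i,i)) = character G \<rho> g"
    using trpow[of 1] g unfolding A_def by (simp add: character_in)
  finally have c1: "character G \<rho> (inv g) = cnj (character G \<rho> g)" .
  have "cmod (character G \<rho> g) = cmod (\<Sum>i<n. B $$ (i,i))"
    using trpow[of 1] g unfolding A_def by (simp add: character_in)
  also have "\<dots> \<le> (\<Sum>i<n. cmod (B $$ (i,i)))" by (rule norm_sum)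
  also have "\<dots> = of_nat n" using nb by simp
  finally show ?thesis using c1 by simp
qed

end

context group begin

lemma class_sum:
  assumes irr: "is_irr_rep G n \<rho>" and g: "g \<in> carrier G" and y: "y \<in> carrier G"
  shows "(\<Sum>x\<in>carrier G. character G \<rho> (x \<otimes> g \<otimes> inv x \<otimes> y))
       = of_nat (card (carrier G)) * character G \<rho> g * character G \<rho> y / of_nat n"
proof -
  have r: "is_rep G n \<rho>" using irr unfolding is_irr_rep_def by auto
  have n: "0 < n" using rep_pos[OF r] .
  define Z where "Z = msum n n (\<lambda>x. \<rho> (x \<otimes> g \<otimes> inv x)) (carrier G)"
  have Zc: "Z \<in> carrier_mat n n" unfolding Z_def by simp
  have cx: "\<rho> (x \<otimes> g \<otimes> inv x) \<in> carrier_mat n n" if "x \<in> carrier G" for x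
    using rep_carrier[OF r] that g by auto
  have comm: "Z * \<rho> h = \<rho> h * Z" if h: "h \<in> carrier G" for h
  proof -
    have "\<rho> h * Z = msum n n (\<lambda>x. \<rho> h * \<rho> (x \<otimes> g \<otimes> inv x)) (carrier G)"
      unfolding Z_def by (rule mult_msum_left[OF rep_carrier[OF r h] cx])
    also have "\<dots> = msum n n (\<lambda>x. \<rho> (h \<otimes> (x \<otimes> g \<otimes> inv x))) (carrier G)"
      by (rule msum_cong) (use h g in \<open>simp add: rep_mult[OF r]\<close>)
    finally have L: "\<rho> h * Z = msum n n (\<lambda>x. \<rho> (h \<otimes> (x \<otimes> g \<otimes> inv x))) (carrier G)" .
    have "Z * \<rho> h = msum n n (\<lambda>x. \<rho> (x \<otimes> g \<otimes> inv x) * \<rho> h) (carrier G)"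
      unfolding Z_def by (rule mult_msum_right[OF rep_carrier[OF r h] cx])
    also have "\<dots> = msum n n (\<lambda>x. \<rho> (x \<otimes> g \<otimes> inv x \<otimes> h)) (carrier G)"
      by (rule msum_cong) (use h g in \<open>simp add: rep_mult[OF r]\<close>)
    also have "\<dots> = msum n n (\<lambda>x. \<rho> ((h \<otimes> x) \<otimes> g \<otimes> inv (h \<otimes> x) \<otimes> h)) (carrier G)"
      by (rule msum_reindex[OF bij_lmult[OF h]])
    also have "\<dots> = msum n n (\<lambda>x. \<rho> (h \<otimes> (x \<otimes> g \<otimes> inv x))) (carrier G)"
    proof (rule msum_cong)
      fix x assume x: "x \<in> carrier G"
      have "(h \<otimes> x) \<otimes> g \<otimes> inv (h \<otimes> x) \<otimes> h = h \<otimes> (x \<otimes> g \<otimes> inv x)"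
        using x h g by (simp add: m_assoc inv_mult_group)
      thus "\<rho> ((h \<otimes> x) \<otimes> g \<otimes> inv (h \<otimes> x) \<otimes> h) = \<rho> (h \<otimes> (x \<otimes> g \<otimes> inv x))" by simp
    qed
    finally show ?thesis using L by simp
  qed
  obtain c where c: "Z = c \<cdot>\<^sub>m 1\<^sub>m n" using schur_scalar[OF irr Zc comm] by blast
  have "mat_trace Z = (\<Sum>x\<in>carrier G. mat_trace (\<rho> (x \<otimes> g \<otimes> inv x)))"
    unfolding Z_def by (rule mat_trace_msum[OF cx])
  also have "\<dots> = (\<Sum>x\<in>carrier G. character G \<rho> g)"
    by (rule sum.cong[OF refl]) (use g character_conj[OF r _ g] in \<open>simp add: character_in\<close>)
  finally have trZ: "mat_trace Z = of_nat (card (carrier G)) * character G \<rho> g" by simp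
  have "mat_trace Z = c * of_nat n" using c by (simp add: mat_trace_smult[of _ n])
  with trZ have cval: "c = of_nat (card (carrier G)) * character G \<rho> g / of_nat n"
    using n by (simp add: field_simps)
  have "(\<Sum>x\<in>carrier G. character G \<rho> (x \<otimes> g \<otimes> inv x \<otimes> y))
      = (\<Sum>x\<in>carrier G. mat_trace (\<rho> (x \<otimes> g \<otimes> inv x) * \<rho> y))"
    by (rule sum.cong[OF refl]) (use g y in \<open>simp add: character_in rep_mult[OF r]\<close>)
  also have "\<dots> = mat_trace (msum n n (\<lambda>x. \<rho> (x \<otimes> g \<otimes> inv x) * \<rho> y) (carrier G))"
    by (rule mat_trace_msum[symmetric]) (use cx rep_carrier[OF r y] in \<open>auto intro!: mult_carrier_mat\<close>)
  also have "msum n n (\<lambda>x. \<rho> (x \<otimes> g \<otimes> inv x) * \<rho> y) (carrier G) = Z * \<rho> y"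
    unfolding Z_def by (rule mult_msum_right[OF rep_carrier[OF r y] cx, symmetric])
  also have "Z * \<rho> y = c \<cdot>\<^sub>m \<rho> y" unfolding c using rep_carrier[OF r y]
    by (simp add: mult_smult_assoc_mat[of _ n n _ n])
  also have "mat_trace (c \<cdot>\<^sub>m \<rho> y) = c * character G \<rho> y"
    using mat_trace_smult[OF rep_carrier[OF r y]] y by (simp add: character_in)
  finally show ?thesis unfolding cval by simp
qed

end

definition dropv :: "nat \<Rightarrow> complex vec \<Rightarrow> complex vec" where
  "dropv n v = vec n (\<lambda>i. v $ Suc i)"
definition consv :: "nat \<Rightarrow> complex \<Rightarrow> complex vec \<Rightarrow> complex vec" where
  "consv n a u = vec (Suc n) (\<lambda>i. if i = 0 then a else u $ (i - 1))"
definition takev :: "nat \<Rightarrow> complex vec \<Rightarrow> complex vec" where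
  "takev n v = vec n (\<lambda>i. v $ i)"

definition flagU :: "nat \<Rightarrow> nat \<Rightarrow> complex vec set" where
  "flagU n k = {v \<in> carrier_vec n. \<forall>i < n - k. v $ i = 0}"

lemma flag_step_A:
  assumes P': "P' \<in> carrier_mat n n"
  defines "P \<equiv> mat (Suc n) (Suc n) (\<lambda>(i,j). if i = 0 then (if j = 0 then 1 else 0)
                    else if j = 0 then 0 else P' $$ (i - 1, j - 1))"
  shows "P \<in> carrier_mat (Suc n) (Suc n)"
    and "\<And>v. v \<in> carrier_vec (Suc n) \<Longrightarrow> P *\<^sub>v v = consv n (v $ 0) (P' *\<^sub>v dropv n v)"
proof -
  show "P \<in> carrier_mat (Suc n) (Suc n)" unfolding P_def by simp
  fix v :: "complex vec" assume v: "v \<in> carrier_vec (Suc n)"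
  show "P *\<^sub>v v = consv n (v $ 0) (P' *\<^sub>v dropv n v)"
  proof (rule eq_vecI)
    fix i assume "i < dim_vec (consv n (v $ 0) (P' *\<^sub>v dropv n v))"
    hence i: "i < Suc n" unfolding consv_def by simp
    have "(P *\<^sub>v v) $ i = (\<Sum>j<Suc n. P $$ (i,j) * v $ j)"
      using i v unfolding P_def by (auto simp: scalar_prod_def lessThan_atLeast0 intro!: sum.cong)
    also have "\<dots> = consv n (v $ 0) (P' *\<^sub>v dropv n v) $ i"
    proof (cases i)
      case 0
      have "(\<Sum>j<Suc n. P $$ (i,j) * v $ j) = (\<Sum>j<Suc n. if j = 0 then v $ 0 else 0)"
        unfolding P_def using 0 by (intro sum.cong) auto
      also have "\<dots> = v $ 0" by simp
      finally show ?thesis unfolding consv_def using 0 by simp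
    next
      case (Suc i')
      hence i': "i' < n" using i by simp
      have "(\<Sum>j<Suc n. P $$ (i,j) * v $ j) = (\<Sum>j<n. P' $$ (i', j) * v $ Suc j)"
        unfolding P_def using Suc i' by (subst sum.lessThan_Suc_shift) (simp del: sum.lessThan_Suc)
      also have "\<dots> = (P' *\<^sub>v dropv n v) $ i'"
        using P' i' by (auto simp: scalar_prod_def dropv_def lessThan_atLeast0 intro!: sum.cong)
      finally show ?thesis unfolding consv_def using Suc i' by simp
    qed
    finally show "(P *\<^sub>v v) $ i = consv n (v $ 0) (P' *\<^sub>v dropv n v) $ i" .
  qed (simp add: P_def consv_def)
qed

lemma flag_step_B:
  assumes P': "P' \<in> carrier_mat n n" and w: "w \<in> carrier_vec (Suc n)"
  defines "P \<equiv> mat (Suc n) (Suc n) (\<lambda>(i,j). if j = n then w $ i else if i = 0 then 0 else P' $$ (i - 1, j))"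
  shows "P \<in> carrier_mat (Suc n) (Suc n)"
    and "\<And>v. v \<in> carrier_vec (Suc n) \<Longrightarrow> P *\<^sub>v v = consv n 0 (P' *\<^sub>v takev n v) + v $ n \<cdot>\<^sub>v w"
proof -
  show "P \<in> carrier_mat (Suc n) (Suc n)" unfolding P_def by simp
  fix v :: "complex vec" assume v: "v \<in> carrier_vec (Suc n)"
  show "P *\<^sub>v v = consv n 0 (P' *\<^sub>v takev n v) + v $ n \<cdot>\<^sub>v w"
  proof (rule eq_vecI)
    fix i assume "i < dim_vec (consv n 0 (P' *\<^sub>v takev n v) + v $ n \<cdot>\<^sub>v w)"
    hence i: "i < Suc n" using w unfolding consv_def by simp
    have "(P *\<^sub>v v) $ i = (\<Sum>j<Suc n. P $$ (i,j) * v $ j)"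
      using i v unfolding P_def by (auto simp: scalar_prod_def lessThan_atLeast0 intro!: sum.cong)
    also have "\<dots> = (\<Sum>j<n. P $$ (i,j) * v $ j) + w $ i * v $ n"
      using i unfolding P_def by simp
    also have "(\<Sum>j<n. P $$ (i,j) * v $ j) = consv n 0 (P' *\<^sub>v takev n v) $ i"
    proof (cases i)
      case 0
      thus ?thesis unfolding P_def consv_def by simp
    next
      case (Suc i')
      hence i': "i' < n" using i by simp
      have "(\<Sum>j<n. P $$ (i,j) * v $ j) = (\<Sum>j<n. P' $$ (i', j) * v $ j)"
        unfolding P_def using Suc i' by (intro sum.cong) auto
      also have "\<dots> = (P' *\<^sub>v takev n v) $ i'"
        using P' i' by (auto simp: scalar_prod_def takev_def lessThan_atLeast0 intro!: sum.cong)
      finally show ?thesis unfolding consv_def using Suc i' by simp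
    qed
    finally show "(P *\<^sub>v v) $ i = (consv n 0 (P' *\<^sub>v takev n v) + v $ n \<cdot>\<^sub>v w) $ i"
      using i w by (simp add: consv_def mult.commute)
  qed (use w in \<open>simp add: P_def consv_def\<close>)
qed

lemma dropv_carrier[simp]: "dropv n v \<in> carrier_vec n" unfolding dropv_def by simp
lemma takev_carrier[simp]: "takev n v \<in> carrier_vec n" unfolding takev_def by simp
lemma consv_carrier[simp]: "consv n a u \<in> carrier_vec (Suc n)" unfolding consv_def by simp
lemma consv_dropv: "v \<in> carrier_vec (Suc n) \<Longrightarrow> consv n (v $ 0) (dropv n v) = v"
  unfolding consv_def dropv_def by (intro eq_vecI) auto
lemma dropv_consv: "u \<in> carrier_vec n \<Longrightarrow> dropv n (consv n a u) = u"
  unfolding consv_def dropv_def by (intro eq_vecI) auto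
lemma consv_0[simp]: "consv n a u $ 0 = a" unfolding consv_def by simp
lemma consv_zero: "consv n 0 (0\<^sub>v n) = 0\<^sub>v (Suc n)"
  unfolding consv_def by (intro eq_vecI) auto
lemma dropv_zero: "dropv n (0\<^sub>v (Suc n)) = 0\<^sub>v n"
  unfolding dropv_def by (intro eq_vecI) auto
lemma dropv_add: "a \<in> carrier_vec (Suc n) \<Longrightarrow> b \<in> carrier_vec (Suc n) \<Longrightarrow> dropv n (a + b) = dropv n a + dropv n b"
  unfolding dropv_def by (intro eq_vecI) auto
lemma dropv_smult: "a \<in> carrier_vec (Suc n) \<Longrightarrow> dropv n (c \<cdot>\<^sub>v a) = c \<cdot>\<^sub>v dropv n a"
  unfolding dropv_def by (intro eq_vecI) auto
lemma carrier_vec_0: "v \<in> carrier_vec 0 \<Longrightarrow> v = 0\<^sub>v 0"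
  by (intro eq_vecI) auto

lemma subspace_flag:
  "is_subspace_vec n W \<Longrightarrow> \<exists>P k. P \<in> carrier_mat n n \<and> (\<forall>v\<in>carrier_vec n. P *\<^sub>v v = 0\<^sub>v n \<longrightarrow> v = 0\<^sub>v n)
      \<and> k \<le> n \<and> W = (\<lambda>v. P *\<^sub>v v) ` flagU n k"
proof (induction n arbitrary: W)
  case 0
  have W: "W = {0\<^sub>v 0}"
  proof
    show "W \<subseteq> {0\<^sub>v 0}" using 0 carrier_vec_0 unfolding is_subspace_vec_def by blast
    show "{0\<^sub>v 0} \<subseteq> W" using 0 unfolding is_subspace_vec_def by blast
  qed
  have F: "flagU 0 0 = {0\<^sub>v 0}"
  proof
    show "flagU 0 0 \<subseteq> {0\<^sub>v 0}" unfolding flagU_def using carrier_vec_0 by blast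
    show "{0\<^sub>v 0} \<subseteq> flagU 0 0" unfolding flagU_def by simp
  qed
  have I: "(\<lambda>v. 1\<^sub>m 0 *\<^sub>v v) ` flagU 0 0 = {0\<^sub>v 0}"
    unfolding F using carrier_vec_0[of "1\<^sub>m 0 *\<^sub>v 0\<^sub>v 0"] by simp
  have inj: "\<forall>v\<in>carrier_vec 0. 1\<^sub>m 0 *\<^sub>v v = 0\<^sub>v 0 \<longrightarrow> v = (0\<^sub>v 0 :: complex vec)"
    using carrier_vec_0 by blast
  show ?case
    by (rule exI[of _ "1\<^sub>m 0"], rule exI[of _ 0]) (use W I inj in simp)
next
  case (Suc n)
  note sub = Suc.prems
  have S: "W \<subseteq> carrier_vec (Suc n) \<and> 0\<^sub>v (Suc n) \<in> W \<and> (\<forall>v \<in> W. \<forall>w \<in> W. v + w \<in> W) \<and> (\<forall>c. \<forall>v \<in> W. c \<cdot>\<^sub>v v \<in> W)"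
    using sub unfolding is_subspace_vec_def .
  have Wc: "W \<subseteq> carrier_vec (Suc n)" and W0: "0\<^sub>v (Suc n) \<in> W" using S by blast+
  have Wadd: "\<And>v w. v \<in> W \<Longrightarrow> w \<in> W \<Longrightarrow> v + w \<in> W" using S by blast
  have Wsm: "\<And>c v. v \<in> W \<Longrightarrow> c \<cdot>\<^sub>v v \<in> W" using S by blast
  define W' where "W' = dropv n ` {v \<in> W. v $ 0 = 0}"
  have sub': "is_subspace_vec n W'"
    unfolding is_subspace_vec_def
  proof (intro conjI ballI allI)
    show "W' \<subseteq> carrier_vec n" unfolding W'_def by auto
    have "dropv n (0\<^sub>v (Suc n)) \<in> W'" unfolding W'_def by (rule imageI) (use W0 in simp)
    thus "0\<^sub>v n \<in> W'" by (simp only: dropv_zero)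
  next
    fix a b assume a: "a \<in> W'" and b: "b \<in> W'"
    then obtain a' b' where a': "a' \<in> W" "a' $ 0 = 0" "a = dropv n a'" and b': "b' \<in> W" "b' $ 0 = 0" "b = dropv n b'"
      unfolding W'_def by auto
    have "a' + b' \<in> W" "(a' + b') $ 0 = 0" using a' b' Wadd Wc by auto
    moreover have "a + b = dropv n (a' + b')"
    proof -
      have "a' \<in> carrier_vec (Suc n)" "b' \<in> carrier_vec (Suc n)" using a' b' Wc by auto
      from dropv_add[OF this] show ?thesis using a' b' by simp
    qed
    ultimately show "a + b \<in> W'" unfolding W'_def by auto
  next
    fix c a assume a: "a \<in> W'"
    then obtain a' where a': "a' \<in> W" "a' $ 0 = 0" "a = dropv n a'" unfolding W'_def by auto
    have "c \<cdot>\<^sub>v a' \<in> W" "(c \<cdot>\<^sub>v a') $ 0 = 0" using a' Wsm Wc by auto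
    moreover have "c \<cdot>\<^sub>v a = dropv n (c \<cdot>\<^sub>v a')" using a' Wc dropv_smult by auto
    ultimately show "c \<cdot>\<^sub>v a \<in> W'" unfolding W'_def by auto
  qed
  from Suc.IH[OF sub'] obtain P' k' where P': "P' \<in> carrier_mat n n"
    and inj': "\<forall>v\<in>carrier_vec n. P' *\<^sub>v v = 0\<^sub>v n \<longrightarrow> v = 0\<^sub>v n"
    and k': "k' \<le> n" and W'eq: "W' = (\<lambda>v. P' *\<^sub>v v) ` flagU n k'" by blast
  have P'c: "P' *\<^sub>v u \<in> carrier_vec n" for u :: "complex vec"
    using P' by (intro carrier_vecI) simp
  show ?case
  proof (cases "\<forall>v\<in>W. v $ 0 = 0")
    case True
    define P where "P = mat (Suc n) (Suc n) (\<lambda>(i,j). if i = 0 then (if j = 0 then 1 else 0)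
                    else if j = 0 then 0 else P' $$ (i - 1, j - 1))"
    have Pc: "P \<in> carrier_mat (Suc n) (Suc n)" and Pv: "\<And>v. v \<in> carrier_vec (Suc n) \<Longrightarrow> P *\<^sub>v v = consv n (v $ 0) (P' *\<^sub>v dropv n v)"
      using flag_step_A[OF P'] unfolding P_def by auto
    have inj: "\<forall>v\<in>carrier_vec (Suc n). P *\<^sub>v v = 0\<^sub>v (Suc n) \<longrightarrow> v = 0\<^sub>v (Suc n)"
    proof (intro ballI impI)
      fix v :: "complex vec" assume v: "v \<in> carrier_vec (Suc n)" and Pv0: "P *\<^sub>v v = 0\<^sub>v (Suc n)"
      have e: "consv n (v $ 0) (P' *\<^sub>v dropv n v) = 0\<^sub>v (Suc n)" using Pv[OF v] Pv0 by simp
      have v0: "v $ 0 = 0" using arg_cong[OF e, of "\<lambda>x. x $ 0"] by simp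
      have "P' *\<^sub>v dropv n v = 0\<^sub>v n" using arg_cong[OF e, of "dropv n"] dropv_consv[OF P'c] dropv_zero by simp
      hence "dropv n v = 0\<^sub>v n" using inj' by auto
      thus "v = 0\<^sub>v (Suc n)" using consv_dropv[OF v] v0 consv_zero by metis
    qed
    have "W = (\<lambda>v. P *\<^sub>v v) ` flagU (Suc n) k'"
    proof
      show "W \<subseteq> (\<lambda>v. P *\<^sub>v v) ` flagU (Suc n) k'"
      proof
        fix x assume x: "x \<in> W"
        have xc: "x \<in> carrier_vec (Suc n)" using x Wc by auto
        have x0: "x $ 0 = 0" using True x by auto
        have "dropv n x \<in> W'" unfolding W'_def using x x0 by auto
        then obtain u where u: "u \<in> flagU n k'" and du: "dropv n x = P' *\<^sub>v u" unfolding W'eq by auto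
        have uc: "u \<in> carrier_vec n" using u unfolding flagU_def by auto
        define v where "v = consv n 0 u"
        have vU: "v \<in> flagU (Suc n) k'" unfolding flagU_def v_def
        proof (intro CollectI conjI allI impI)
          fix i assume i: "i < Suc n - k'"
          show "consv n 0 u $ i = 0"
          proof (cases i)
            case (Suc i')
            hence "i' < n - k'" using i by simp
            thus ?thesis using u Suc i unfolding flagU_def consv_def by auto
          qed (simp)
        qed simp
        have "P *\<^sub>v v = consv n 0 (P' *\<^sub>v u)" unfolding v_def using Pv[of "consv n 0 u"] dropv_consv[OF uc] by simp
        also have "\<dots> = x" using du consv_dropv[OF xc] x0 by simp
        finally show "x \<in> (\<lambda>v. P *\<^sub>v v) ` flagU (Suc n) k'" using vU by force
      qed
    next
      show "(\<lambda>v. P *\<^sub>v v) ` flagU (Suc n) k' \<subseteq> W"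
      proof
        fix y assume "y \<in> (\<lambda>v. P *\<^sub>v v) ` flagU (Suc n) k'"
        then obtain v where v: "v \<in> flagU (Suc n) k'" and y: "y = P *\<^sub>v v" by auto
        have vc: "v \<in> carrier_vec (Suc n)" using v unfolding flagU_def by auto
        have v0: "v $ 0 = 0" using v k' unfolding flagU_def by auto
        have "dropv n v \<in> flagU n k'" using v unfolding flagU_def dropv_def by auto
        hence "P' *\<^sub>v dropv n v \<in> W'" unfolding W'eq by auto
        then obtain x where x: "x \<in> W" "x $ 0 = 0" "P' *\<^sub>v dropv n v = dropv n x" unfolding W'_def by auto
        have xc: "x \<in> carrier_vec (Suc n)" using x Wc by auto
        have "y = consv n 0 (dropv n x)" using y Pv[OF vc] v0 x by simp
        also have "\<dots> = x" using consv_dropv[OF xc] x by simp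
        finally show "y \<in> W" using x by simp
      qed
    qed
    thus ?thesis using Pc inj k' by (intro exI[of _ P] exI[of _ k']) auto
  next
    case False
    then obtain w0 where w0: "w0 \<in> W" "w0 $ 0 \<noteq> 0" by auto
    define w where "w = (1 / w0 $ 0) \<cdot>\<^sub>v w0"
    have wW: "w \<in> W" unfolding w_def using Wsm w0 by auto
    have wc: "w \<in> carrier_vec (Suc n)" using wW Wc by auto
    have w1: "w $ 0 = 1" unfolding w_def using w0 Wc by auto
    define P where "P = mat (Suc n) (Suc n) (\<lambda>(i,j). if j = n then w $ i else if i = 0 then 0 else P' $$ (i - 1, j))"
    have Pc: "P \<in> carrier_mat (Suc n) (Suc n)" and Pv: "\<And>v. v \<in> carrier_vec (Suc n) \<Longrightarrow> P *\<^sub>v v = consv n 0 (P' *\<^sub>v takev n v) + v $ n \<cdot>\<^sub>v w"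
      using flag_step_B[OF P' wc] unfolding P_def by auto
    have inj: "\<forall>v\<in>carrier_vec (Suc n). P *\<^sub>v v = 0\<^sub>v (Suc n) \<longrightarrow> v = 0\<^sub>v (Suc n)"
    proof (intro ballI impI)
      fix v :: "complex vec" assume v: "v \<in> carrier_vec (Suc n)" and Pv0: "P *\<^sub>v v = 0\<^sub>v (Suc n)"
      have e: "consv n 0 (P' *\<^sub>v takev n v) + v $ n \<cdot>\<^sub>v w = 0\<^sub>v (Suc n)" using Pv[OF v] Pv0 by simp
      have vn: "v $ n = 0" using arg_cong[OF e, of "\<lambda>x. x $ 0"] w1 wc by simp
      have z: "0 \<cdot>\<^sub>v w = 0\<^sub>v (Suc n)" using wc by (intro eq_vecI) auto
      have e2: "consv n 0 (P' *\<^sub>v takev n v) = 0\<^sub>v (Suc n)"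
        using e unfolding vn z by (simp add: right_zero_vec[OF consv_carrier])
      have "P' *\<^sub>v takev n v = 0\<^sub>v n" using arg_cong[OF e2, of "dropv n"] dropv_consv[OF P'c] dropv_zero by simp
      hence tk: "takev n v = 0\<^sub>v n" using inj' by auto
      show "v = 0\<^sub>v (Suc n)"
      proof (rule eq_vecI)
        fix i assume "i < dim_vec (0\<^sub>v (Suc n) :: complex vec)"
        hence i: "i < Suc n" by simp
        show "v $ i = 0\<^sub>v (Suc n) $ i"
        proof (cases "i < n")
          case True
          thus ?thesis using arg_cong[OF tk, of "\<lambda>x. x $ i"] i unfolding takev_def by simp
        next
          case False hence "i = n" using i by simp
          thus ?thesis using vn by simp
        qed
      qed (use v in simp)
    qed
    have "W = (\<lambda>v. P *\<^sub>v v) ` flagU (Suc n) (Suc k')"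
    proof
      show "W \<subseteq> (\<lambda>v. P *\<^sub>v v) ` flagU (Suc n) (Suc k')"
      proof
        fix x assume x: "x \<in> W"
        have xc: "x \<in> carrier_vec (Suc n)" using x Wc by auto
        define y where "y = x + (- (x $ 0)) \<cdot>\<^sub>v w"
        have yW: "y \<in> W" unfolding y_def using x wW Wadd Wsm by auto
        have yc: "y \<in> carrier_vec (Suc n)" using yW Wc by auto
        have y0: "y $ 0 = 0" unfolding y_def using xc wc w1 by simp
        have "dropv n y \<in> W'" unfolding W'_def using yW y0 by auto
        then obtain u where u: "u \<in> flagU n k'" and du: "dropv n y = P' *\<^sub>v u" unfolding W'eq by auto
        have uc: "u \<in> carrier_vec n" using u unfolding flagU_def by auto
        define v where "v = vec (Suc n) (\<lambda>i. if i < n then u $ i else x $ 0)"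
        have vc: "v \<in> carrier_vec (Suc n)" unfolding v_def by simp
        have vU: "v \<in> flagU (Suc n) (Suc k')" using u unfolding flagU_def v_def by auto
        have tv: "takev n v = u" unfolding takev_def v_def using uc by (intro eq_vecI) auto
        have vn: "v $ n = x $ 0" unfolding v_def by simp
        have "P *\<^sub>v v = consv n 0 (dropv n y) + x $ 0 \<cdot>\<^sub>v w" using Pv[OF vc] tv vn du by simp
        also have "consv n 0 (dropv n y) = y" using consv_dropv[OF yc] y0 by simp
        also have "y + x $ 0 \<cdot>\<^sub>v w = x" unfolding y_def using xc wc by (intro eq_vecI) auto
        finally show "x \<in> (\<lambda>v. P *\<^sub>v v) ` flagU (Suc n) (Suc k')" using vU by force
      qed
    next
      show "(\<lambda>v. P *\<^sub>v v) ` flagU (Suc n) (Suc k') \<subseteq> W"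
      proof
        fix y assume "y \<in> (\<lambda>v. P *\<^sub>v v) ` flagU (Suc n) (Suc k')"
        then obtain v where v: "v \<in> flagU (Suc n) (Suc k')" and y: "y = P *\<^sub>v v" by auto
        have vc: "v \<in> carrier_vec (Suc n)" using v unfolding flagU_def by auto
        have "takev n v \<in> flagU n k'" using v unfolding flagU_def takev_def by auto
        hence "P' *\<^sub>v takev n v \<in> W'" unfolding W'eq by auto
        then obtain x where x: "x \<in> W" "x $ 0 = 0" "P' *\<^sub>v takev n v = dropv n x" unfolding W'_def by auto
        have xc: "x \<in> carrier_vec (Suc n)" using x Wc by auto
        have "y = consv n 0 (dropv n x) + v $ n \<cdot>\<^sub>v w" using y Pv[OF vc] x by simp
        also have "consv n 0 (dropv n x) = x" using consv_dropv[OF xc] x by simp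
        finally show "y \<in> W" using x wW Wadd Wsm by auto
      qed
    qed
    thus ?thesis using Pc inj k' by (intro exI[of _ P] exI[of _ "Suc k'"]) auto
  qed
qed

lemma sum_split_add: fixes a k :: nat shows "(\<Sum>l<a+k. f l) = (\<Sum>l<a. f l) + (\<Sum>l<k. f (a+l))"
  by (induction k) (auto simp: add_ac)

lemma flagU_0: "flagU n 0 = {0\<^sub>v n}"
  unfolding flagU_def by (auto intro!: eq_vecI)

lemma flagU_n: "flagU n n = carrier_vec n"
  unfolding flagU_def by auto

context group begin

lemma rep_split:
  assumes r: "is_rep G n \<rho>" and sub: "is_subspace_vec n W"
    and inv: "\<forall>g\<in>carrier G. \<forall>v\<in>W. \<rho> g *\<^sub>v v \<in> W"
    and ne0: "W \<noteq> {0\<^sub>v n}" and neall: "W \<noteq> carrier_vec n"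
  shows "\<exists>n1 \<rho>1 n2 \<rho>2. is_rep G n1 \<rho>1 \<and> is_rep G n2 \<rho>2 \<and> n1 < n \<and> n2 < n \<and>
           (\<forall>g\<in>carrier G. character G \<rho> g = character G \<rho>1 g + character G \<rho>2 g)"
proof -
  obtain P k where Pc: "P \<in> carrier_mat n n" and inj: "\<forall>v\<in>carrier_vec n. P *\<^sub>v v = 0\<^sub>v n \<longrightarrow> v = 0\<^sub>v n"
    and kn: "k \<le> n" and Weq: "W = (\<lambda>v. P *\<^sub>v v) ` flagU n k"
    using subspace_flag[OF sub] by blast
  obtain S where Sc: "S \<in> carrier_mat n n" and SP: "S * P = 1\<^sub>m n" and PS: "P * S = 1\<^sub>m n"
    using injective_square_inverse[OF Pc] inj by blast
  have k0: "k \<noteq> 0"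
  proof
    assume k0: "k = 0"
    have "W = {P *\<^sub>v 0\<^sub>v n}" using Weq k0 flagU_0 by simp
    also have "P *\<^sub>v 0\<^sub>v n = 0\<^sub>v n" using Pc by (intro eq_vecI) (auto simp: scalar_prod_def)
    finally show False using ne0 by simp
  qed
  have kn': "k \<noteq> n"
  proof
    assume kn0: "k = n"
    have W: "W = (\<lambda>v. P *\<^sub>v v) ` carrier_vec n" using Weq kn0 flagU_n by simp
    have "carrier_vec n \<subseteq> W"
    proof
      fix x :: "complex vec" assume x: "x \<in> carrier_vec n"
      have "x = P *\<^sub>v (S *\<^sub>v x)" using Pc Sc x PS by (simp flip: assoc_mult_mat_vec)
      moreover have "S *\<^sub>v x \<in> carrier_vec n" using Sc x by simp
      ultimately show "x \<in> W" unfolding W by (rule image_eqI)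
    qed
    moreover have "W \<subseteq> carrier_vec n" using sub unfolding is_subspace_vec_def by auto
    ultimately show False using neall by auto
  qed
  define a where "a = n - k"
  have a0: "0 < a" and an: "a < n" and nak: "n = a + k" using k0 kn' kn unfolding a_def by auto
  define \<tau> where "\<tau> = (\<lambda>g. S * \<rho> g * P)"
  have \<tau>c: "\<tau> g \<in> carrier_mat n n" if "g \<in> carrier G" for g
    unfolding \<tau>_def using Sc Pc rep_carrier[OF r that] by auto
  have \<tau>mult: "\<tau> (g \<otimes> h) = \<tau> g * \<tau> h" if g: "g \<in> carrier G" and h: "h \<in> carrier G" for g h
  proof -
    have rg: "\<rho> g \<in> carrier_mat n n" and rh: "\<rho> h \<in> carrier_mat n n"
      using rep_carrier[OF r g] rep_carrier[OF r h] .
    have "\<tau> g * \<tau> h = (S * \<rho> g * P) * (S * \<rho> h * P)" unfolding \<tau>_def ..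
    also have "\<dots> = S * \<rho> g * (P * (S * \<rho> h * P))"
      by (rule assoc_mult_mat) (use Sc Pc rg rh in auto)
    also have "P * (S * \<rho> h * P) = (P * S) * \<rho> h * P"
      using Sc Pc rh by (simp add: assoc_mult_mat[of _ n n _ n _ n])
    also have "\<dots> = \<rho> h * P" using PS rh by simp
    also have "S * \<rho> g * (\<rho> h * P) = S * (\<rho> g * \<rho> h) * P"
      using Sc Pc rg rh by (simp add: assoc_mult_mat[of _ n n _ n _ n])
    finally show ?thesis unfolding \<tau>_def using rep_mult[OF r g h] by simp
  qed
  have \<tau>one: "\<tau> \<one> = 1\<^sub>m n" unfolding \<tau>_def using rep_one[OF r] Sc SP by simp
  have \<tau>zero: "\<tau> g $$ (i,j) = 0" if g: "g \<in> carrier G" and i: "i < a" and j1: "a \<le> j" and j2: "j < n" for g i j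
  proof -
    have uU: "unit_vec n j \<in> flagU n k" unfolding flagU_def a_def using j1 j2 a_def by auto
    hence "P *\<^sub>v unit_vec n j \<in> W" unfolding Weq by auto
    hence "\<rho> g *\<^sub>v (P *\<^sub>v unit_vec n j) \<in> W" using inv g by auto
    then obtain u where u: "u \<in> flagU n k" and eq: "\<rho> g *\<^sub>v (P *\<^sub>v unit_vec n j) = P *\<^sub>v u"
      unfolding Weq by auto
    have uc: "u \<in> carrier_vec n" using u unfolding flagU_def by auto
    have rg: "\<rho> g \<in> carrier_mat n n" using rep_carrier[OF r g] .
    have "\<tau> g *\<^sub>v unit_vec n j = (S * \<rho> g) *\<^sub>v (P *\<^sub>v unit_vec n j)"
      unfolding \<tau>_def by (rule assoc_mult_mat_vec) (use Sc Pc rg in auto)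
    also have "\<dots> = S *\<^sub>v (\<rho> g *\<^sub>v (P *\<^sub>v unit_vec n j))"
      by (rule assoc_mult_mat_vec) (use Sc Pc rg in auto)
    also have "\<dots> = S *\<^sub>v (P *\<^sub>v u)" unfolding eq ..
    also have "\<dots> = u" using Sc Pc uc SP by (simp flip: assoc_mult_mat_vec)
    finally have "(\<tau> g *\<^sub>v unit_vec n j) $ i = u $ i" by simp
    moreover have "(\<tau> g *\<^sub>v unit_vec n j) $ i = \<tau> g $$ (i,j)" using \<tau>c[OF g] i an j2 by simp
    moreover have "u $ i = 0" using u i unfolding flagU_def a_def by auto
    ultimately show ?thesis by simp
  qed
  define \<rho>1 where "\<rho>1 = (\<lambda>g. mat a a (\<lambda>(i,j). \<tau> g $$ (i,j)))"
  define \<rho>2 where "\<rho>2 = (\<lambda>g. mat k k (\<lambda>(i,j). \<tau> g $$ (a + i, a + j)))"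
  have prod: "(\<tau> g * \<tau> h) $$ (i,j) = (\<Sum>l<a. \<tau> g $$ (i,l) * \<tau> h $$ (l,j)) + (\<Sum>l<k. \<tau> g $$ (i,a+l) * \<tau> h $$ (a+l,j))"
    if g: "g \<in> carrier G" and h: "h \<in> carrier G" and i: "i < n" and j: "j < n" for g h i j
  proof -
    have "(\<tau> g * \<tau> h) $$ (i,j) = (\<Sum>l<n. \<tau> g $$ (i,l) * \<tau> h $$ (l,j))"
      using \<tau>c[OF g] \<tau>c[OF h] i j by (auto simp: scalar_prod_def lessThan_atLeast0 intro!: sum.cong)
    thus ?thesis unfolding nak sum_split_add by simp
  qed
  have r1: "is_rep G a \<rho>1"
    unfolding is_rep_def
  proof (intro conjI ballI)
    show "0 < a" by fact
    show "\<And>g. \<rho>1 g \<in> carrier_mat a a" unfolding \<rho>1_def by simp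
    show "\<rho>1 \<one> = 1\<^sub>m a" unfolding \<rho>1_def \<tau>one using an by (intro eq_matI) auto
  next
    fix g h assume g: "g \<in> carrier G" and h: "h \<in> carrier G"
    show "\<rho>1 (g \<otimes> h) = \<rho>1 g * \<rho>1 h"
    proof (rule eq_matI)
      fix i j assume "i < dim_row (\<rho>1 g * \<rho>1 h)" "j < dim_col (\<rho>1 g * \<rho>1 h)"
      hence i: "i < a" and j: "j < a" unfolding \<rho>1_def by auto
      have "\<rho>1 (g \<otimes> h) $$ (i,j) = (\<tau> g * \<tau> h) $$ (i,j)" unfolding \<rho>1_def using \<tau>mult[OF g h] i j by simp
      also have "\<dots> = (\<Sum>l<a. \<tau> g $$ (i,l) * \<tau> h $$ (l,j))"
      proof -
        have "(\<Sum>l<k. \<tau> g $$ (i,a+l) * \<tau> h $$ (a+l,j)) = 0"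
          using \<tau>zero[OF g i] nak by (intro sum.neutral) auto
        thus ?thesis using prod[OF g h, of i j] i j an by simp
      qed
      also have "\<dots> = (\<rho>1 g * \<rho>1 h) $$ (i,j)"
        unfolding \<rho>1_def using i j by (auto simp: scalar_prod_def lessThan_atLeast0 intro!: sum.cong)
      finally show "\<rho>1 (g \<otimes> h) $$ (i,j) = (\<rho>1 g * \<rho>1 h) $$ (i,j)" .
    qed (auto simp: \<rho>1_def)
  qed
  have r2: "is_rep G k \<rho>2"
    unfolding is_rep_def
  proof (intro conjI ballI)
    show "0 < k" using k0 by simp
    show "\<And>g. \<rho>2 g \<in> carrier_mat k k" unfolding \<rho>2_def by simp
    show "\<rho>2 \<one> = 1\<^sub>m k" unfolding \<rho>2_def \<tau>one using nak by (intro eq_matI) auto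
  next
    fix g h assume g: "g \<in> carrier G" and h: "h \<in> carrier G"
    show "\<rho>2 (g \<otimes> h) = \<rho>2 g * \<rho>2 h"
    proof (rule eq_matI)
      fix i j assume "i < dim_row (\<rho>2 g * \<rho>2 h)" "j < dim_col (\<rho>2 g * \<rho>2 h)"
      hence i: "i < k" and j: "j < k" unfolding \<rho>2_def by auto
      have "\<rho>2 (g \<otimes> h) $$ (i,j) = (\<tau> g * \<tau> h) $$ (a+i,a+j)" unfolding \<rho>2_def using \<tau>mult[OF g h] i j by simp
      also have "\<dots> = (\<Sum>l<k. \<tau> g $$ (a+i,a+l) * \<tau> h $$ (a+l,a+j))"
      proof -
        have "(\<Sum>l<a. \<tau> g $$ (a+i,l) * \<tau> h $$ (l,a+j)) = 0"
          using \<tau>zero[OF h] i j nak by (intro sum.neutral) auto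
        thus ?thesis using prod[OF g h, of "a+i" "a+j"] i j nak by simp
      qed
      also have "\<dots> = (\<rho>2 g * \<rho>2 h) $$ (i,j)"
        unfolding \<rho>2_def using i j by (auto simp: scalar_prod_def lessThan_atLeast0 intro!: sum.cong)
      finally show "\<rho>2 (g \<otimes> h) $$ (i,j) = (\<rho>2 g * \<rho>2 h) $$ (i,j)" .
    qed (auto simp: \<rho>2_def)
  qed
  have tr: "character G \<rho> g = character G \<rho>1 g + character G \<rho>2 g" if g: "g \<in> carrier G" for g
  proof -
    have "character G \<rho> g = mat_trace (\<tau> g)"
      unfolding \<tau>_def using g mat_trace_similar[OF rep_carrier[OF r g] Sc Pc PS] by (simp add: character_in)
    also have "\<dots> = (\<Sum>i<a. \<tau> g $$ (i,i)) + (\<Sum>i<k. \<tau> g $$ (a+i,a+i))"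
      unfolding mat_trace_def using \<tau>c[OF g] nak by (simp add: sum_split_add)
    also have "\<dots> = character G \<rho>1 g + character G \<rho>2 g"
      using g unfolding \<rho>1_def \<rho>2_def by (simp add: character_in mat_trace_def)
    finally show ?thesis .
  qed
  show ?thesis using r1 r2 an k0 kn' kn tr by (intro exI[of _ a] exI[of _ \<rho>1] exI[of _ k] exI[of _ \<rho>2]) auto
qed

lemma rep_decomp:
  "is_rep G n \<rho> \<Longrightarrow> \<exists>M. set_mset M \<subseteq> Irr G \<and> (\<forall>g\<in>carrier G. character G \<rho> g = (\<Sum>\<chi>\<in>#M. \<chi> g))"
proof (induction n arbitrary: \<rho> rule: less_induct)
  case (less n)
  show ?case
  proof (cases "is_irr_rep G n \<rho>")
    case True
    hence "character G \<rho> \<in> Irr G" unfolding Irr_def by blast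
    thus ?thesis by (intro exI[of _ "{#character G \<rho>#}"]) auto
  next
    case False
    then obtain W where sub: "is_subspace_vec n W" and inv: "\<forall>g\<in>carrier G. \<forall>v\<in>W. \<rho> g *\<^sub>v v \<in> W"
      and ne: "\<not> (W = {0\<^sub>v n} \<or> W = carrier_vec n)"
      using less.prems unfolding is_irr_rep_def by blast
    from rep_split[OF less.prems sub inv] ne obtain n1 \<rho>1 n2 \<rho>2 where
      r1: "is_rep G n1 \<rho>1" and r2: "is_rep G n2 \<rho>2" and n1: "n1 < n" and n2: "n2 < n"
      and tr: "\<forall>g\<in>carrier G. character G \<rho> g = character G \<rho>1 g + character G \<rho>2 g" by blast
    obtain M1 where M1: "set_mset M1 \<subseteq> Irr G" "\<forall>g\<in>carrier G. character G \<rho>1 g = (\<Sum>\<chi>\<in>#M1. \<chi> g)"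
      using less.IH[OF n1 r1] by blast
    obtain M2 where M2: "set_mset M2 \<subseteq> Irr G" "\<forall>g\<in>carrier G. character G \<rho>2 g = (\<Sum>\<chi>\<in>#M2. \<chi> g)"
      using less.IH[OF n2 r2] by blast
    show ?thesis using M1 M2 tr by (intro exI[of _ "M1 + M2"]) auto
  qed
qed

end

lemma sum_sum_mset_swap: "(\<Sum>x\<in>S. \<Sum>y\<in>#M. f x y) = (\<Sum>y\<in>#M. \<Sum>x\<in>S. f x y)"
  by (induction M) (auto simp: sum.distrib)

context group begin

lemma regular_rep:
  assumes fin: "finite (carrier G)"
  shows "\<exists>\<rho>. is_rep G (card (carrier G)) \<rho> \<and>
    (\<forall>g\<in>carrier G. character G \<rho> g = (if g = \<one> then of_nat (card (carrier G)) else 0))"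
proof -
  define N where "N = card (carrier G)"
  obtain e where e: "bij_betw e {0..<N} (carrier G)" unfolding N_def using ex_bij_betw_nat_finite[OF fin] by blast
  have einj: "\<And>i j. i < N \<Longrightarrow> j < N \<Longrightarrow> e i = e j \<longleftrightarrow> i = j"
    using e unfolding bij_betw_def inj_on_def by auto
  have ec: "\<And>i. i < N \<Longrightarrow> e i \<in> carrier G" using e unfolding bij_betw_def by auto
  have esurj: "\<And>x. x \<in> carrier G \<Longrightarrow> \<exists>l<N. e l = x" using e unfolding bij_betw_def by (metis atLeastLessThan_iff imageE)
  have N: "0 < N" unfolding N_def using fin by (auto simp: card_gt_0_iff)
  define \<rho> where "\<rho> = (\<lambda>g. mat N N (\<lambda>(i,j). if e i = g \<otimes> e j then (1::complex) else 0))"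
  have r: "is_rep G N \<rho>"
    unfolding is_rep_def
  proof (intro conjI ballI)
    show "0 < N" by fact
    show "\<And>g. \<rho> g \<in> carrier_mat N N" unfolding \<rho>_def by simp
    show "\<rho> \<one> = 1\<^sub>m N" unfolding \<rho>_def by (intro eq_matI) (auto simp: ec einj)
  next
    fix g h assume g: "g \<in> carrier G" and h: "h \<in> carrier G"
    show "\<rho> (g \<otimes> h) = \<rho> g * \<rho> h"
    proof (rule eq_matI)
      fix i j assume "i < dim_row (\<rho> g * \<rho> h)" "j < dim_col (\<rho> g * \<rho> h)"
      hence i: "i < N" and j: "j < N" unfolding \<rho>_def by auto
      obtain l0 where l0: "l0 < N" "e l0 = h \<otimes> e j" using esurj[of "h \<otimes> e j"] h ec[OF j] by auto
      have "(\<rho> g * \<rho> h) $$ (i,j) = (\<Sum>l\<in>{0..<N}. (if e i = g \<otimes> e l then 1 else 0) * (if e l = h \<otimes> e j then 1 else 0))"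
        unfolding \<rho>_def using i j by (auto simp: scalar_prod_def intro!: sum.cong)
      also have "\<dots> = (\<Sum>l\<in>{0..<N}. if l = l0 then (if e i = g \<otimes> e l0 then 1 else 0) else 0)"
      proof (rule sum.cong[OF refl])
        fix l assume l: "l \<in> {0..<N}"
        have "e l = h \<otimes> e j \<longleftrightarrow> l = l0" using l0 einj[of l l0] l by auto
        thus "(if e i = g \<otimes> e l then 1 else 0) * (if e l = h \<otimes> e j then 1 else (0::complex))
            = (if l = l0 then (if e i = g \<otimes> e l0 then 1 else 0) else 0)" by auto
      qed
      also have "\<dots> = (if e i = g \<otimes> e l0 then 1 else 0)" using l0 by simp
      also have "g \<otimes> e l0 = g \<otimes> h \<otimes> e j" using l0 g h ec[OF j] by (simp add: m_assoc)
      finally show "\<rho> (g \<otimes> h) $$ (i,j) = (\<rho> g * \<rho> h) $$ (i,j)" unfolding \<rho>_def using i j by simp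
    qed (auto simp: \<rho>_def)
  qed
  have ch: "character G \<rho> g = (if g = \<one> then of_nat N else 0)" if g: "g \<in> carrier G" for g
  proof -
    have "character G \<rho> g = (\<Sum>i<N. if e i = g \<otimes> e i then 1 else 0)"
      using g unfolding \<rho>_def by (simp add: character_in mat_trace_def)
    also have "\<dots> = (\<Sum>i<N. if g = \<one> then 1 else 0)"
      by (intro sum.cong refl) (use g ec in auto)
    finally show ?thesis by simp
  qed
  show ?thesis using r ch unfolding N_def by blast
qed

lemma trivial_irr: "(\<lambda>g. if g \<in> carrier G then 1 else 0) \<in> Irr G"
proof -
  define \<rho> where "\<rho> = (\<lambda>g::'a. 1\<^sub>m 1 :: complex mat)"
  have r: "is_rep G 1 \<rho>" unfolding is_rep_def \<rho>_def by auto
  have irr: "is_irr_rep G 1 \<rho>"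
    unfolding is_irr_rep_def
  proof (intro conjI r allI impI)
    fix W assume "is_subspace_vec 1 W \<and> (\<forall>g\<in>carrier G. \<forall>v\<in>W. \<rho> g *\<^sub>v v \<in> W)"
    hence sub: "is_subspace_vec 1 W" by simp
    hence Wc: "W \<subseteq> carrier_vec 1" and Wsm: "\<And>c v. v \<in> W \<Longrightarrow> c \<cdot>\<^sub>v v \<in> W" and W0: "0\<^sub>v 1 \<in> W"
      unfolding is_subspace_vec_def by auto
    show "W = {0\<^sub>v 1} \<or> W = carrier_vec 1"
    proof (cases "W = {0\<^sub>v 1}")
      case False
      then obtain v where v: "v \<in> W" "v \<noteq> 0\<^sub>v 1" using W0 by auto
      have vc: "v \<in> carrier_vec 1" using v Wc by auto
      have v0: "v $ 0 \<noteq> 0"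
      proof
        assume "v $ 0 = 0"
        hence "v = 0\<^sub>v 1" using vc by (intro eq_vecI) auto
        thus False using v by simp
      qed
      have "carrier_vec 1 \<subseteq> W"
      proof
        fix u :: "complex vec" assume u: "u \<in> carrier_vec 1"
        have "u = (u $ 0 / v $ 0) \<cdot>\<^sub>v v" using u vc v0 by (intro eq_vecI) auto
        thus "u \<in> W" using Wsm[OF v(1)] by metis
      qed
      thus ?thesis using Wc by auto
    qed simp
  qed
  have "character G \<rho> = (\<lambda>g. if g \<in> carrier G then 1 else 0)"
    unfolding character_def \<rho>_def by auto
  thus ?thesis using irr unfolding Irr_def by (intro CollectI exI[of _ 1] exI[of _ \<rho>]) simp
qed

lemma Irr_rep: "\<chi> \<in> Irr G \<Longrightarrow> \<exists>n \<rho>. is_irr_rep G n \<rho> \<and> \<chi> = character G \<rho>"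
  unfolding Irr_def by blast

lemma irr_orth:
  assumes c1: "\<chi> \<in> Irr G" and c2: "\<psi> \<in> Irr G"
  shows "(\<Sum>g\<in>carrier G. \<chi> g * \<psi> (inv g)) = (if \<chi> = \<psi> then of_nat (card (carrier G)) else 0)"
proof -
  obtain n \<rho> where irr1: "is_irr_rep G n \<rho>" and \<chi>: "\<chi> = character G \<rho>" using Irr_rep[OF c1] by blast
  obtain m \<sigma> where irr2: "is_irr_rep G m \<sigma>" and \<psi>: "\<psi> = character G \<sigma>" using Irr_rep[OF c2] by blast
  show ?thesis
  proof (cases "\<chi> = \<psi>")
    case True
    thus ?thesis using orth_same[OF irr1] \<chi> by simp
  next
    case False
    thus ?thesis using orth_diff[OF irr2 irr1] \<chi> \<psi> by auto
  qed
qed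

lemma Irr_degree: "\<chi> \<in> Irr G \<Longrightarrow> \<exists>n. 0 < n \<and> \<chi> \<one> = of_nat n"
proof -
  assume "\<chi> \<in> Irr G"
  then obtain n \<rho> where irr: "is_irr_rep G n \<rho>" and \<chi>: "\<chi> = character G \<rho>" using Irr_rep by blast
  have r: "is_rep G n \<rho>" using irr unfolding is_irr_rep_def by auto
  show ?thesis using character_one[OF r] rep_pos[OF r] \<chi> by auto
qed

theorem Irr_finite_sum:
  assumes fin: "finite (carrier G)"
  shows "finite (Irr G) \<and> (\<forall>g\<in>carrier G. (\<Sum>\<chi>\<in>Irr G. \<chi> \<one> * \<chi> g) = (if g = \<one> then of_nat (card (carrier G)) else 0))"
proof -
  define N where "N = card (carrier G)"
  have N: "0 < N" unfolding N_def using fin by (auto simp: card_gt_0_iff)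
  obtain \<rho> where r: "is_rep G N \<rho>" and ch: "\<forall>g\<in>carrier G. character G \<rho> g = (if g = \<one> then of_nat N else 0)"
    using regular_rep[OF fin] unfolding N_def by blast
  obtain M where M: "set_mset M \<subseteq> Irr G" and chM: "\<forall>g\<in>carrier G. character G \<rho> g = (\<Sum>\<chi>\<in>#M. \<chi> g)"
    using rep_decomp[OF r] by blast
  have cnt: "of_nat (count M \<psi>) = \<psi> \<one>" if \<psi>: "\<psi> \<in> Irr G" for \<psi>
  proof -
    have "(\<Sum>g\<in>carrier G. character G \<rho> g * \<psi> (inv g)) = (\<Sum>g\<in>carrier G. if g = \<one> then of_nat N * \<psi> (inv g) else 0)"
      using ch by (intro sum.cong) auto
    also have "\<dots> = of_nat N * \<psi> \<one>" using fin by simp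
    finally have A: "(\<Sum>g\<in>carrier G. character G \<rho> g * \<psi> (inv g)) = of_nat N * \<psi> \<one>" .
    have "(\<Sum>g\<in>carrier G. character G \<rho> g * \<psi> (inv g)) = (\<Sum>g\<in>carrier G. \<Sum>\<chi>\<in>#M. \<chi> g * \<psi> (inv g))"
      using chM by (intro sum.cong) (auto simp: sum_mset_distrib_right)
    also have "\<dots> = (\<Sum>\<chi>\<in>#M. \<Sum>g\<in>carrier G. \<chi> g * \<psi> (inv g))" by (rule sum_sum_mset_swap)
    also have "\<dots> = (\<Sum>\<chi>\<in>#M. if \<chi> = \<psi> then of_nat N else 0)"
      using M \<psi> irr_orth unfolding N_def by (intro arg_cong[of _ _ sum_mset] image_mset_cong) auto
    also have "\<dots> = of_nat N * of_nat (count M \<psi>)" by (simp add: sum_mset_delta)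
    finally show ?thesis using A N by simp
  qed
  have IrrM: "Irr G = set_mset M"
  proof
    show "Irr G \<subseteq> set_mset M"
    proof
      fix \<psi> assume \<psi>: "\<psi> \<in> Irr G"
      obtain n where n: "0 < n" "\<psi> \<one> = of_nat n" using Irr_degree[OF \<psi>] by blast
      have "count M \<psi> = n" using cnt[OF \<psi>] n by simp
      thus "\<psi> \<in> set_mset M" using n count_eq_zero_iff[of M \<psi>] by auto
    qed
  qed (use M in auto)
  have finI: "finite (Irr G)" unfolding IrrM by simp
  have "(\<Sum>\<chi>\<in>Irr G. \<chi> \<one> * \<chi> g) = (if g = \<one> then of_nat N else 0)" if g: "g \<in> carrier G" for g
  proof -
    have "(\<Sum>\<chi>\<in>#M. \<chi> g) = (\<Sum>\<chi>\<in>#M. \<Sum>\<psi>\<in>Irr G. if \<chi> = \<psi> then \<psi> g else 0)"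
      using M finI by (intro arg_cong[of _ _ sum_mset] image_mset_cong) (auto simp: sum.delta)
    also have "\<dots> = (\<Sum>\<psi>\<in>Irr G. \<Sum>\<chi>\<in>#M. if \<chi> = \<psi> then \<psi> g else 0)" by (rule sum_sum_mset_swap[symmetric])
    also have "\<dots> = (\<Sum>\<psi>\<in>Irr G. \<psi> \<one> * \<psi> g)"
      by (intro sum.cong refl) (simp add: sum_mset_delta cnt mult.commute)
    finally show ?thesis using chM ch g by simp
  qed
  thus ?thesis using finI unfolding N_def by blast
qed

end

context group begin

lemma cancel_l[simp]: "x \<in> carrier G \<Longrightarrow> z \<in> carrier G \<Longrightarrow> inv x \<otimes> (x \<otimes> z) = z"
  by (simp add: m_assoc[symmetric])
lemma cancel_r[simp]: "x \<in> carrier G \<Longrightarrow> z \<in> carrier G \<Longrightarrow> x \<otimes> (inv x \<otimes> z) = z"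
  by (simp add: m_assoc[symmetric])

lemma conj_class_carrier: "conj_class G g \<subseteq> carrier G" if "g \<in> carrier G"
  unfolding conj_class_def using that by auto

lemma conj_class_self: "g \<in> carrier G \<Longrightarrow> g \<in> conj_class G g"
  unfolding conj_class_def by (auto intro!: exI[of _ \<one>])

lemma conj_class_mem: "k \<in> conj_class G g \<longleftrightarrow> (\<exists>x\<in>carrier G. x \<otimes> g \<otimes> inv x = k)"
  unfolding conj_class_def by auto

lemma conj_class_eq:
  assumes g: "g \<in> carrier G" and k: "k \<in> conj_class G g"
  shows "conj_class G k = conj_class G g"
proof -
  obtain y where y: "y \<in> carrier G" and ky: "k = y \<otimes> g \<otimes> inv y" using k unfolding conj_class_mem by auto
  have kc: "k \<in> carrier G" using ky y g by simp
  show ?thesis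
  proof
    show "conj_class G k \<subseteq> conj_class G g"
    proof
      fix z assume "z \<in> conj_class G k"
      then obtain x where x: "x \<in> carrier G" and z: "z = x \<otimes> k \<otimes> inv x" unfolding conj_class_mem by auto
      have "z = (x \<otimes> y) \<otimes> g \<otimes> inv (x \<otimes> y)" using x y g unfolding z ky by (simp add: m_assoc inv_mult_group)
      thus "z \<in> conj_class G g" unfolding conj_class_mem using x y by blast
    qed
  next
    show "conj_class G g \<subseteq> conj_class G k"
    proof
      fix z assume "z \<in> conj_class G g"
      then obtain x where x: "x \<in> carrier G" and z: "z = x \<otimes> g \<otimes> inv x" unfolding conj_class_mem by auto
      have "z = (x \<otimes> inv y) \<otimes> k \<otimes> inv (x \<otimes> inv y)" using x y g unfolding z ky by (simp add: m_assoc inv_mult_group)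
      thus "z \<in> conj_class G k" unfolding conj_class_mem using x y by blast
    qed
  qed
qed

lemma conj_class_one: "conj_class G \<one> = {\<one>}"
proof
  show "conj_class G \<one> \<subseteq> {\<one>}" unfolding conj_class_def by auto
  show "{\<one>} \<subseteq> conj_class G \<one>" using conj_class_self[OF one_closed] by simp
qed

lemma conj_classes_disjoint:
  assumes "C \<in> conj_classes G" "D \<in> conj_classes G" "C \<noteq> D"
  shows "C \<inter> D = {}"
proof (rule ccontr)
  assume "C \<inter> D \<noteq> {}"
  then obtain k where k: "k \<in> C" "k \<in> D" by auto
  obtain c d where c: "c \<in> carrier G" "C = conj_class G c" and d: "d \<in> carrier G" "D = conj_class G d"
    using assms unfolding conj_classes_def by auto
  have "conj_class G k = C" using conj_class_eq[OF c(1)] k c by simp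
  moreover have "conj_class G k = D" using conj_class_eq[OF d(1)] k d by simp
  ultimately show False using assms by simp
qed

lemma conj_class_not_one:
  assumes C: "C \<in> conj_classes G" and ne: "C \<noteq> {\<one>}"
  shows "\<one> \<notin> C"
proof
  assume o: "\<one> \<in> C"
  obtain c where c: "c \<in> carrier G" "C = conj_class G c" using C unfolding conj_classes_def by auto
  have "conj_class G \<one> = C" using conj_class_eq[OF c(1)] o c by simp
  thus False using ne conj_class_one by simp
qed

lemma character_class_const:
  assumes \<chi>: "\<chi> \<in> Irr G" and g: "g \<in> carrier G" and k: "k \<in> conj_class G g"
  shows "\<chi> k = \<chi> g"
proof -
  obtain n \<rho> where irr: "is_irr_rep G n \<rho>" and e: "\<chi> = character G \<rho>" using Irr_rep[OF \<chi>] by blast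
  have r: "is_rep G n \<rho>" using irr unfolding is_irr_rep_def by auto
  obtain x where x: "x \<in> carrier G" and kx: "k = x \<otimes> g \<otimes> inv x" using k unfolding conj_class_mem by auto
  show ?thesis unfolding e kx using character_conj[OF r x g] .
qed

lemma inv_in_conj_class:
  assumes g: "g \<in> carrier G" and k: "k \<in> conj_class G g"
  shows "inv k \<in> conj_class G (inv g)"
proof -
  obtain x where x: "x \<in> carrier G" and kx: "k = x \<otimes> g \<otimes> inv x" using k unfolding conj_class_mem by auto
  have "inv k = x \<otimes> inv g \<otimes> inv x" unfolding kx using x g by (simp add: inv_mult_group m_assoc)
  thus ?thesis unfolding conj_class_mem using x by (intro bexI[of _ x]) auto
qed

end

context group begin

lemma mult_inv_eq_one: "a \<in> carrier G \<Longrightarrow> k \<in> carrier G \<Longrightarrow> (a \<otimes> inv k = \<one>) \<longleftrightarrow> (a = k)"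
  by (metis inv_equality inv_inv r_inv inv_closed)

lemma card_filter_sum: "finite A \<Longrightarrow> (of_nat (card {x\<in>A. P x}) :: complex) = (\<Sum>x\<in>A. if P x then 1 else 0)"
  by (simp add: sum.inter_filter[symmetric])

lemma irr_class_count:
  assumes fin: "finite (carrier G)" and g: "g \<in> carrier G" and k: "k \<in> carrier G"
  shows "(\<Sum>\<chi>\<in>Irr G. \<chi> g * \<chi> (inv k)) = of_nat (card {x \<in> carrier G. x \<otimes> g \<otimes> inv x = k})"
proof -
  define N where "N = card (carrier G)"
  have N: "0 < N" unfolding N_def using fin by (auto simp: card_gt_0_iff)
  have finI: "finite (Irr G)" and I7: "\<And>z. z \<in> carrier G \<Longrightarrow> (\<Sum>\<chi>\<in>Irr G. \<chi> \<one> * \<chi> z) = (if z = \<one> then of_nat N else 0)"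
    using Irr_finite_sum[OF fin] unfolding N_def by auto
  have "of_nat N * of_nat (card {x \<in> carrier G. x \<otimes> g \<otimes> inv x = k})
      = (\<Sum>x\<in>carrier G. if x \<otimes> g \<otimes> inv x = k then (of_nat N :: complex) else 0)"
    unfolding card_filter_sum[OF fin] by (simp add: sum_distrib_left if_distrib cong: if_cong)
  also have "\<dots> = (\<Sum>x\<in>carrier G. \<Sum>\<chi>\<in>Irr G. \<chi> \<one> * \<chi> (x \<otimes> g \<otimes> inv x \<otimes> inv k))"
  proof (rule sum.cong[OF refl])
    fix x assume x: "x \<in> carrier G"
    have z: "x \<otimes> g \<otimes> inv x \<otimes> inv k \<in> carrier G" using x g k by simp
    show "(if x \<otimes> g \<otimes> inv x = k then of_nat N else 0) = (\<Sum>\<chi>\<in>Irr G. \<chi> \<one> * \<chi> (x \<otimes> g \<otimes> inv x \<otimes> inv k))"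
      unfolding I7[OF z] using mult_inv_eq_one[of "x \<otimes> g \<otimes> inv x" k] x g k by simp
  qed
  also have "\<dots> = (\<Sum>\<chi>\<in>Irr G. \<chi> \<one> * (\<Sum>x\<in>carrier G. \<chi> (x \<otimes> g \<otimes> inv x \<otimes> inv k)))"
    by (subst sum.swap) (simp add: sum_distrib_left)
  also have "\<dots> = (\<Sum>\<chi>\<in>Irr G. of_nat N * (\<chi> g * \<chi> (inv k)))"
  proof (rule sum.cong[OF refl])
    fix \<chi> assume \<chi>: "\<chi> \<in> Irr G"
    obtain n \<rho> where irr: "is_irr_rep G n \<rho>" and e: "\<chi> = character G \<rho>" using Irr_rep[OF \<chi>] by blast
    have r: "is_rep G n \<rho>" using irr unfolding is_irr_rep_def by auto
    have n: "0 < n" using rep_pos[OF r] .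
    have one: "\<chi> \<one> = of_nat n" unfolding e using character_one[OF r] .
    show "\<chi> \<one> * (\<Sum>x\<in>carrier G. \<chi> (x \<otimes> g \<otimes> inv x \<otimes> inv k)) = of_nat N * (\<chi> g * \<chi> (inv k))"
      unfolding one unfolding e class_sum[OF irr g inv_closed[OF k]] N_def using n by simp
  qed
  also have "\<dots> = of_nat N * (\<Sum>\<chi>\<in>Irr G. \<chi> g * \<chi> (inv k))" by (simp add: sum_distrib_left)
  finally show ?thesis using N by simp
qed

lemma class_size_formula:
  assumes fin: "finite (carrier G)" and g: "g \<in> carrier G"
  shows "of_nat (card (conj_class G g)) * (\<Sum>\<chi>\<in>Irr G. \<chi> g * \<chi> (inv g)) = of_nat (card (carrier G))"
proof -
  define F where "F = (\<lambda>k. {x \<in> carrier G. x \<otimes> g \<otimes> inv x = k})"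
  have finC: "finite (conj_class G g)" using conj_class_carrier[OF g] fin finite_subset by blast
  have mem: "x \<otimes> g \<otimes> inv x \<in> conj_class G g" if "x \<in> carrier G" for x
    unfolding conj_class_mem using that by blast
  have cover: "carrier G = (\<Union>k\<in>conj_class G g. F k)"
    unfolding F_def using mem by auto
  have "card (carrier G) = (\<Sum>k\<in>conj_class G g. card (F k))"
    unfolding cover by (rule card_UN_disjoint) (use finC fin in \<open>auto simp: F_def\<close>)
  hence "(of_nat (card (carrier G)) :: complex) = (\<Sum>k\<in>conj_class G g. of_nat (card (F k)))" by simp
  also have "\<dots> = (\<Sum>k\<in>conj_class G g. \<Sum>\<chi>\<in>Irr G. \<chi> g * \<chi> (inv g))"
  proof (rule sum.cong[OF refl])
    fix k assume k: "k \<in> conj_class G g"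
    have kc: "k \<in> carrier G" using k conj_class_carrier[OF g] by auto
    have "of_nat (card (F k)) = (\<Sum>\<chi>\<in>Irr G. \<chi> g * \<chi> (inv k))"
      unfolding F_def using irr_class_count[OF fin g kc] by simp
    also have "\<dots> = (\<Sum>\<chi>\<in>Irr G. \<chi> g * \<chi> (inv g))"
      by (intro sum.cong refl)
         (use character_class_const[OF _ inv_closed[OF g] inv_in_conj_class[OF g k]] in simp)
    finally show "of_nat (card (F k)) = (\<Sum>\<chi>\<in>Irr G. \<chi> g * \<chi> (inv g))" .
  qed
  also have "\<dots> = of_nat (card (conj_class G g)) * (\<Sum>\<chi>\<in>Irr G. \<chi> g * \<chi> (inv g))" by simp
  finally show ?thesis by simp
qed

end

context group begin

lemma Irr_inv_bound:
  assumes fin: "finite (carrier G)" and \<chi>: "\<chi> \<in> Irr G" and g: "g \<in> carrier G"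
  shows "\<chi> (inv g) = cnj (\<chi> g) \<and> cmod (\<chi> g) \<le> cmod (\<chi> \<one>)"
proof -
  obtain n \<rho> where irr: "is_irr_rep G n \<rho>" and e: "\<chi> = character G \<rho>" using Irr_rep[OF \<chi>] by blast
  have r: "is_rep G n \<rho>" using irr unfolding is_irr_rep_def by auto
  have "cmod (\<chi> \<one>) = n" unfolding e character_one[OF r] by simp
  thus ?thesis using character_inv_conj[OF fin r g] e by simp
qed

lemma Irr_one_real: "\<chi> \<in> Irr G \<Longrightarrow> \<chi> \<one> = of_real (cmod (\<chi> \<one>)) \<and> 1 \<le> cmod (\<chi> \<one>)"
  using Irr_degree[of \<chi>] by auto

lemma sum_deg_sq:
  assumes fin: "finite (carrier G)"
  shows "(\<Sum>\<chi>\<in>Irr G. cmod (\<chi> \<one>) ^ 2) = real (card (carrier G))"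
proof -
  have "(\<Sum>\<chi>\<in>Irr G. \<chi> \<one> * \<chi> \<one>) = of_nat (card (carrier G))"
    using Irr_finite_sum[OF fin] by auto
  moreover have "\<chi> \<one> * \<chi> \<one> = of_real (cmod (\<chi> \<one>) ^ 2)" if "\<chi> \<in> Irr G" for \<chi>
    using Irr_one_real[OF that] by (metis of_real_mult power2_eq_square)
  ultimately have "of_real (\<Sum>\<chi>\<in>Irr G. cmod (\<chi> \<one>) ^ 2) = (of_nat (card (carrier G)) :: complex)"
    by (simp add: of_real_sum)
  thus ?thesis by (metis of_real_eq_iff of_real_of_nat_eq)
qed

lemma sum_char_sq:
  assumes fin: "finite (carrier G)" and g: "g \<in> carrier G"
  shows "real (card (conj_class G g)) * (\<Sum>\<chi>\<in>Irr G. cmod (\<chi> g) ^ 2) = real (card (carrier G))"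
proof -
  have "\<chi> g * \<chi> (inv g) = of_real (cmod (\<chi> g) ^ 2)" if "\<chi> \<in> Irr G" for \<chi>
    using Irr_inv_bound[OF fin that g] by (metis complex_norm_square of_real_power)
  hence "(\<Sum>\<chi>\<in>Irr G. \<chi> g * \<chi> (inv g)) = of_real (\<Sum>\<chi>\<in>Irr G. cmod (\<chi> g) ^ 2)"
    by (simp add: of_real_sum)
  with class_size_formula[OF fin g]
  have "of_real (real (card (conj_class G g)) * (\<Sum>\<chi>\<in>Irr G. cmod (\<chi> g) ^ 2)) = (of_real (real (card (carrier G))) :: complex)"
    by simp
  thus ?thesis using of_real_eq_iff by blast
qed

lemma cnt_real:
  assumes fin: "finite (carrier G)" and h: "h \<in> carrier G" and k: "k \<in> carrier G"
  shows "(\<Sum>\<chi>\<in>Irr G. \<chi> h * cnj (\<chi> k)) = of_nat (card {x \<in> carrier G. x \<otimes> h \<otimes> inv x = k})"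
proof -
  have "(\<Sum>\<chi>\<in>Irr G. \<chi> h * cnj (\<chi> k)) = (\<Sum>\<chi>\<in>Irr G. \<chi> h * \<chi> (inv k))"
    using Irr_inv_bound[OF fin _ k] by simp
  thus ?thesis using irr_class_count[OF fin h k] by simp
qed

end

lemma amgm_sum:
  fixes a b :: "'x \<Rightarrow> real" and t :: real
  assumes t: "0 < t"
  shows "(\<Sum>x\<in>I. a x * b x) \<le> (t * (\<Sum>x\<in>I. a x ^ 2) + (\<Sum>x\<in>I. b x ^ 2) / t) / 2"
proof -
  have "a x * b x \<le> (t * a x ^ 2 + b x ^ 2 / t) / 2" for x
  proof -
    have "0 \<le> (t * a x - b x) ^ 2 / t" using t by simp
    also have "(t * a x - b x) ^ 2 / t = t * a x ^ 2 - 2 * a x * b x + b x ^ 2 / t"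
      using t by (simp add: power2_eq_square field_simps)
    finally show ?thesis by simp
  qed
  hence "(\<Sum>x\<in>I. a x * b x) \<le> (\<Sum>x\<in>I. (t * a x ^ 2 + b x ^ 2 / t) / 2)" by (rule sum_mono)
  also have "\<dots> = (t * (\<Sum>x\<in>I. a x ^ 2) + (\<Sum>x\<in>I. b x ^ 2) / t) / 2"
    by (simp add: sum_divide_distrib[symmetric] sum.distrib sum_distrib_left)
  finally show ?thesis .
qed

context group begin

lemma sum_H_partition:
  fixes f :: "'a \<Rightarrow> 'c :: comm_monoid_add"
  assumes fin: "finite (carrier G)" and sH: "subgroup H G"
  shows "(\<Sum>h\<in>H - {\<one>}. f h) = (\<Sum>C\<in>conj_classes G - {{\<one>}}. \<Sum>h\<in>C \<inter> H. f h)"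
proof -
  have Hc: "H \<subseteq> carrier G" using sH by (rule subgroup.subset)
  have eq: "H - {\<one>} = \<Union> ((\<lambda>C. C \<inter> H) ` (conj_classes G - {{\<one>}}))"
  proof
    show "H - {\<one>} \<subseteq> \<Union> ((\<lambda>C. C \<inter> H) ` (conj_classes G - {{\<one>}}))"
    proof
      fix h assume h: "h \<in> H - {\<one>}"
      have hc: "h \<in> carrier G" using h Hc by auto
      have "conj_class G h \<in> conj_classes G" unfolding conj_classes_def using hc by auto
      moreover have "conj_class G h \<noteq> {\<one>}" using conj_class_self[OF hc] h by auto
      moreover have "h \<in> conj_class G h \<inter> H" using conj_class_self[OF hc] h by auto
      ultimately show "h \<in> \<Union> ((\<lambda>C. C \<inter> H) ` (conj_classes G - {{\<one>}}))" by blast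
    qed
    show "\<Union> ((\<lambda>C. C \<inter> H) ` (conj_classes G - {{\<one>}})) \<subseteq> H - {\<one>}"
      using conj_class_not_one by blast
  qed
  have finCL: "finite (conj_classes G - {{\<one>}})" unfolding conj_classes_def using fin by simp
  have finH: "finite H" using Hc fin finite_subset by blast
  show ?thesis unfolding eq
    by (rule sum.UNION_disjoint[OF finCL]) (use finH conj_classes_disjoint in auto)
qed

lemma classes_rep: "C \<in> conj_classes G \<Longrightarrow> h \<in> C \<Longrightarrow> conj_class G h = C \<and> h \<in> carrier G"
  unfolding conj_classes_def using conj_class_eq conj_class_carrier by blast

end

context group begin

lemma D_formula:
  assumes fin: "finite (carrier G)" and sH: "subgroup H G"
  shows "D_dist G H = (\<Sum>\<chi>\<in>Irr G. cmod (\<chi> \<one>) * cmod (\<Sum>h\<in>H - {\<one>}. \<chi> h)) / real (card (carrier G))"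
proof -
  have Hc: "H \<subseteq> carrier G" using sH by (rule subgroup.subset)
  have finH: "finite H" using Hc fin finite_subset by blast
  have oneH: "\<one> \<in> H" using sH by (rule subgroup.one_closed)
  have "cmod (P_dist G H \<chi> - P_dist G {\<one>} \<chi>) = cmod (\<chi> \<one>) * cmod (\<Sum>h\<in>H - {\<one>}. \<chi> h) / real (card (carrier G))" for \<chi>
  proof -
    have "(\<Sum>h\<in>H. \<chi> h) = \<chi> \<one> + (\<Sum>h\<in>H - {\<one>}. \<chi> h)" using sum.remove[OF finH oneH] .
    hence "P_dist G H \<chi> - P_dist G {\<one>} \<chi> = \<chi> \<one> / of_nat (card (carrier G)) * (\<Sum>h\<in>H - {\<one>}. \<chi> h)"
      unfolding P_dist_def char_degree_def by (simp add: algebra_simps)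
    thus ?thesis by (simp add: norm_mult norm_divide)
  qed
  thus ?thesis unfolding D_dist_def by (simp add: sum_divide_distrib)
qed

end

context group begin

definition crep :: "'a set \<Rightarrow> 'a" where
  "crep C = (SOME c. c \<in> carrier G \<and> C = conj_class G c)"

lemma crep: assumes C: "C \<in> conj_classes G" shows "crep C \<in> carrier G \<and> conj_class G (crep C) = C"
proof -
  have "\<exists>c. c \<in> carrier G \<and> C = conj_class G c" using C unfolding conj_classes_def by auto
  from someI_ex[OF this] show ?thesis unfolding crep_def by auto
qed

lemma powr_half: "0 < m \<Longrightarrow> (m::real) powr (-1/2) = 1 / sqrt m"
  by (simp add: powr_minus_divide powr_half_sqrt)

lemma class_bound:
  assumes fin: "finite (carrier G)" and C: "C \<in> conj_classes G"
  shows "(\<Sum>\<chi>\<in>Irr G. cmod (\<chi> \<one>) * cmod (\<chi> (crep C))) \<le> real (card (carrier G)) * real (card C) powr (-1/2)"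
proof -
  define Nr where "Nr = real (card (carrier G))"
  define m where "m = real (card C)"
  have cr: "crep C \<in> carrier G" and cc: "conj_class G (crep C) = C" using crep[OF C] by auto
  have finC: "finite C" using conj_class_carrier[OF cr] cc fin finite_subset by metis
  have m: "1 \<le> m" unfolding m_def using conj_class_self[OF cr] cc finC
    by (metis One_nat_def Suc_leI card_gt_0_iff empty_iff of_nat_1 of_nat_le_iff)
  have sq1: "(\<Sum>\<chi>\<in>Irr G. cmod (\<chi> \<one>) ^ 2) = Nr" unfolding Nr_def by (rule sum_deg_sq[OF fin])
  have sq2: "(\<Sum>\<chi>\<in>Irr G. cmod (\<chi> (crep C)) ^ 2) = Nr / m"
    using sum_char_sq[OF fin cr] m unfolding cc Nr_def m_def by (simp add: field_simps)
  define t where "t = 1 / sqrt m"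
  have t: "0 < t" unfolding t_def using m by simp
  have "(\<Sum>\<chi>\<in>Irr G. cmod (\<chi> \<one>) * cmod (\<chi> (crep C))) \<le> (t * Nr + (Nr / m) / t) / 2"
    using amgm_sum[OF t, of "\<lambda>\<chi>. cmod (\<chi> \<one>)" "\<lambda>\<chi>. cmod (\<chi> (crep C))" "Irr G"] sq1 sq2 by simp
  also have "(Nr / m) / t = Nr / sqrt m"
  proof -
    have "sqrt m * sqrt m = m" using m by simp
    thus ?thesis unfolding t_def using m by (simp add: field_simps)
  qed
  also have "(t * Nr + Nr / sqrt m) / 2 = Nr * m powr (-1/2)"
  proof -
    have p: "m powr (-1/2) = 1 / sqrt m" by (rule powr_half) (use m in simp)
    show ?thesis unfolding p t_def by simp
  qed
  finally show ?thesis unfolding Nr_def m_def .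
qed

lemma upper_bound:
  assumes fin: "finite (carrier G)" and sH: "subgroup H G"
  shows "D_dist G H \<le> (\<Sum>C\<in>conj_classes G - {{\<one>}}. real (card (C \<inter> H)) * real (card C) powr (-1/2))"
proof -
  define Nr where "Nr = real (card (carrier G))"
  have Nr: "0 < Nr" unfolding Nr_def using fin by (auto simp: card_gt_0_iff)
  define CL where "CL = conj_classes G - {{\<one>}}"
  have S: "cmod (\<Sum>h\<in>H - {\<one>}. \<chi> h) \<le> (\<Sum>C\<in>CL. real (card (C \<inter> H)) * cmod (\<chi> (crep C)))"
    if \<chi>: "\<chi> \<in> Irr G" for \<chi>
  proof -
    have "(\<Sum>h\<in>H - {\<one>}. \<chi> h) = (\<Sum>C\<in>CL. \<Sum>h\<in>C \<inter> H. \<chi> h)"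
      unfolding CL_def by (rule sum_H_partition[OF fin sH])
    also have "\<dots> = (\<Sum>C\<in>CL. of_nat (card (C \<inter> H)) * \<chi> (crep C))"
    proof (rule sum.cong[OF refl])
      fix C assume C: "C \<in> CL"
      have CC: "C \<in> conj_classes G" using C unfolding CL_def by auto
      have "(\<Sum>h\<in>C \<inter> H. \<chi> h) = (\<Sum>h\<in>C \<inter> H. \<chi> (crep C))"
      proof (rule sum.cong[OF refl])
        fix h assume h: "h \<in> C \<inter> H"
        show "\<chi> h = \<chi> (crep C)"
          using character_class_const[OF \<chi>, of "crep C" h] crep[OF CC] h by auto
      qed
      thus "(\<Sum>h\<in>C \<inter> H. \<chi> h) = of_nat (card (C \<inter> H)) * \<chi> (crep C)" by simp
    qed
    finally have "cmod (\<Sum>h\<in>H - {\<one>}. \<chi> h) = cmod (\<Sum>C\<in>CL. of_nat (card (C \<inter> H)) * \<chi> (crep C))" by simp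
    also have "\<dots> \<le> (\<Sum>C\<in>CL. cmod (of_nat (card (C \<inter> H)) * \<chi> (crep C)))" by (rule norm_sum)
    also have "\<dots> = (\<Sum>C\<in>CL. real (card (C \<inter> H)) * cmod (\<chi> (crep C)))" by (simp add: norm_mult)
    finally show ?thesis .
  qed
  have "D_dist G H * Nr = (\<Sum>\<chi>\<in>Irr G. cmod (\<chi> \<one>) * cmod (\<Sum>h\<in>H - {\<one>}. \<chi> h))"
    using D_formula[OF fin sH] Nr unfolding Nr_def by simp
  also have "\<dots> \<le> (\<Sum>\<chi>\<in>Irr G. cmod (\<chi> \<one>) * (\<Sum>C\<in>CL. real (card (C \<inter> H)) * cmod (\<chi> (crep C))))"
    by (rule sum_mono) (use S in \<open>simp add: mult_left_mono\<close>)
  also have "\<dots> = (\<Sum>C\<in>CL. real (card (C \<inter> H)) * (\<Sum>\<chi>\<in>Irr G. cmod (\<chi> \<one>) * cmod (\<chi> (crep C))))"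
    by (simp add: sum_distrib_left sum_distrib_right sum.swap[of _ CL] ac_simps)
  also have "\<dots> \<le> (\<Sum>C\<in>CL. real (card (C \<inter> H)) * (Nr * real (card C) powr (-1/2)))"
    by (rule sum_mono, rule mult_left_mono) (use class_bound[OF fin] in \<open>auto simp: CL_def Nr_def\<close>)
  also have "\<dots> = Nr * (\<Sum>C\<in>CL. real (card (C \<inter> H)) * real (card C) powr (-1/2))"
    by (simp add: sum_distrib_left mult.left_commute)
  finally show ?thesis using Nr unfolding CL_def by (simp add: mult.commute)
qed

end

context group begin

lemma lower_bound:
  assumes fin: "finite (carrier G)" and sH: "subgroup H G" and Hne: "H \<noteq> {\<one>}"
  shows "(\<Sum>C\<in>conj_classes G - {{\<one>}}. real (card (C \<inter> H)) ^ 2 / (real (card H) * real (card C))) < D_dist G H"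
proof -
  have nsq: "\<And>z::complex. z * cnj z = of_real (cmod z ^ 2)" by (metis complex_norm_square of_real_power)
  define Nr where "Nr = real (card (carrier G))"
  have Nr: "0 < Nr" unfolding Nr_def using fin by (auto simp: card_gt_0_iff)
  define CL where "CL = conj_classes G - {{\<one>}}"
  define H' where "H' = H - {\<one>}"
  define S where "S = (\<lambda>\<chi>. \<Sum>h\<in>H'. (\<chi> h :: complex))"
  define cnt where "cnt = (\<lambda>h k. card {x \<in> carrier G. x \<otimes> h \<otimes> inv x = k})"
  have Hc: "H \<subseteq> carrier G" using sH by (rule subgroup.subset)
  have finH: "finite H" using Hc fin finite_subset by blast
  have oneH: "\<one> \<in> H" using sH by (rule subgroup.one_closed)
  have H'c: "H' \<subseteq> carrier G" unfolding H'_def using Hc by auto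
  have finH': "finite H'" unfolding H'_def using finH by simp
  have cardH': "card H' = card H - 1" unfolding H'_def using finH oneH by simp
  obtain h0 where h0: "h0 \<in> H" "h0 \<noteq> \<one>" using Hne oneH by blast
  have H'pos: "0 < card H'" unfolding H'_def using h0 finH by (auto simp: card_gt_0_iff)
  have cardH: "2 \<le> card H" using cardH' H'pos by simp
  have finI: "finite (Irr G)" using Irr_finite_sum[OF fin] by simp
  define Dsum where "Dsum = (\<Sum>\<chi>\<in>Irr G. cmod (\<chi> \<one>) * cmod (S \<chi>))"
  have D: "D_dist G H = Dsum / Nr" unfolding Dsum_def S_def H'_def Nr_def using D_formula[OF fin sH] .
  define T where "T = (\<Sum>\<chi>\<in>Irr G. cmod (S \<chi>) ^ 2)"
  have T1: "T = (\<Sum>h\<in>H'. \<Sum>k\<in>H'. real (cnt h k))"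
  proof -
    have "(of_real T :: complex) = (\<Sum>\<chi>\<in>Irr G. S \<chi> * cnj (S \<chi>))"
      unfolding T_def by (simp add: of_real_sum nsq)
    also have "\<dots> = (\<Sum>\<chi>\<in>Irr G. \<Sum>h\<in>H'. \<Sum>k\<in>H'. \<chi> h * cnj (\<chi> k))"
      unfolding S_def by (simp add: sum_product cnj_sum)
    also have "\<dots> = (\<Sum>h\<in>H'. \<Sum>k\<in>H'. \<Sum>\<chi>\<in>Irr G. \<chi> h * cnj (\<chi> k))"
    proof -
      have "(\<Sum>\<chi>\<in>Irr G. \<Sum>h\<in>H'. \<Sum>k\<in>H'. \<chi> h * cnj (\<chi> k)) = (\<Sum>h\<in>H'. \<Sum>\<chi>\<in>Irr G. \<Sum>k\<in>H'. \<chi> h * cnj (\<chi> k))"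
        by (rule sum.swap)
      also have "\<dots> = (\<Sum>h\<in>H'. \<Sum>k\<in>H'. \<Sum>\<chi>\<in>Irr G. \<chi> h * cnj (\<chi> k))"
        by (intro sum.cong refl) (rule sum.swap)
      finally show ?thesis .
    qed
    also have "\<dots> = (\<Sum>h\<in>H'. \<Sum>k\<in>H'. of_nat (cnt h k))"
      unfolding cnt_def using H'c by (intro sum.cong refl) (auto intro!: cnt_real[OF fin])
    also have "\<dots> = of_real (\<Sum>h\<in>H'. \<Sum>k\<in>H'. real (cnt h k))" by (simp add: of_real_sum)
    finally show ?thesis using of_real_eq_iff by blast
  qed
  have T2: "(\<Sum>k\<in>H'. real (cnt h k)) = real (card (conj_class G h \<inter> H)) * Nr / real (card (conj_class G h))"
    if h: "h \<in> H'" for h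
  proof -
    have hc: "h \<in> carrier G" using h H'c by auto
    have h1: "h \<noteq> \<one>" using h unfolding H'_def by auto
    have finC: "finite (conj_class G h)" using conj_class_carrier[OF hc] fin finite_subset by blast
    have cpos: "0 < card (conj_class G h)" using conj_class_self[OF hc] finC by (auto simp: card_gt_0_iff)
    have Cin: "conj_class G h \<in> conj_classes G" unfolding conj_classes_def using hc by auto
    have Cne: "conj_class G h \<noteq> {\<one>}" using conj_class_self[OF hc] h1 by auto
    have one_notin: "\<one> \<notin> conj_class G h" using conj_class_not_one[OF Cin Cne] .
    have val: "real (cnt h k) = (if k \<in> conj_class G h then Nr / real (card (conj_class G h)) else 0)"
      if k: "k \<in> H'" for k
    proof (cases "k \<in> conj_class G h")
      case True
      have kc: "k \<in> carrier G" using k H'c by auto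
      have "(of_nat (cnt h k) :: complex) = (\<Sum>\<chi>\<in>Irr G. \<chi> h * cnj (\<chi> k))"
        unfolding cnt_def using cnt_real[OF fin hc kc] by simp
      also have "\<dots> = (\<Sum>\<chi>\<in>Irr G. \<chi> h * cnj (\<chi> h))"
        by (intro sum.cong refl) (use character_class_const[OF _ hc True] in simp)
      also have "\<dots> = of_real (\<Sum>\<chi>\<in>Irr G. cmod (\<chi> h) ^ 2)"
        by (simp add: of_real_sum nsq)
      finally have "real (cnt h k) = (\<Sum>\<chi>\<in>Irr G. cmod (\<chi> h) ^ 2)"
        by (metis of_real_eq_iff of_real_of_nat_eq)
      moreover have "real (card (conj_class G h)) * (\<Sum>\<chi>\<in>Irr G. cmod (\<chi> h) ^ 2) = Nr"
        using sum_char_sq[OF fin hc] unfolding Nr_def .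
      ultimately show ?thesis using True cpos by (simp add: field_simps)
    next
      case False
      have e: "{x \<in> carrier G. x \<otimes> h \<otimes> inv x = k} = {}" using False unfolding conj_class_mem by auto
      show ?thesis unfolding cnt_def e using False by simp
    qed
    have "(\<Sum>k\<in>H'. real (cnt h k)) = (\<Sum>k\<in>H'. if k \<in> conj_class G h then Nr / real (card (conj_class G h)) else 0)"
      using val by (intro sum.cong) auto
    also have "\<dots> = real (card (H' \<inter> conj_class G h)) * (Nr / real (card (conj_class G h)))"
      using finH' by (simp add: sum.If_cases Int_def)
    also have "H' \<inter> conj_class G h = conj_class G h \<inter> H" unfolding H'_def using one_notin by auto
    finally show ?thesis by simp
  qed
  have T3: "T = Nr * (\<Sum>C\<in>CL. real (card (C \<inter> H)) ^ 2 / real (card C))"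
  proof -
    have "T = (\<Sum>h\<in>H'. real (card (conj_class G h \<inter> H)) * Nr / real (card (conj_class G h)))"
      unfolding T1 using T2 by (intro sum.cong) auto
    also have "\<dots> = (\<Sum>C\<in>CL. \<Sum>h\<in>C \<inter> H. real (card (conj_class G h \<inter> H)) * Nr / real (card (conj_class G h)))"
      unfolding H'_def CL_def by (rule sum_H_partition[OF fin sH])
    also have "\<dots> = (\<Sum>C\<in>CL. \<Sum>h\<in>C \<inter> H. real (card (C \<inter> H)) * Nr / real (card C))"
      by (intro sum.cong refl) (auto simp: CL_def dest: classes_rep)
    also have "\<dots> = (\<Sum>C\<in>CL. Nr * (real (card (C \<inter> H)) ^ 2 / real (card C)))"
      by (intro sum.cong refl) (simp add: power2_eq_square)
    also have "\<dots> = Nr * (\<Sum>C\<in>CL. real (card (C \<inter> H)) ^ 2 / real (card C))"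
      by (simp add: sum_distrib_left)
    finally show ?thesis .
  qed
  have B: "T \<le> (real (card H) - 1) * Dsum"
  proof -
    have "cmod (S \<chi>) ^ 2 \<le> (real (card H) - 1) * (cmod (\<chi> \<one>) * cmod (S \<chi>))" if \<chi>: "\<chi> \<in> Irr G" for \<chi>
    proof -
      have "cmod (S \<chi>) \<le> (\<Sum>h\<in>H'. cmod (\<chi> h))" unfolding S_def by (rule norm_sum)
      also have "\<dots> \<le> (\<Sum>h\<in>H'. cmod (\<chi> \<one>))"
        by (rule sum_mono) (use Irr_inv_bound[OF fin \<chi>] H'c in auto)
      also have "\<dots> = (real (card H) - 1) * cmod (\<chi> \<one>)" using cardH' cardH by (simp add: of_nat_diff)
      finally have "cmod (S \<chi>) \<le> (real (card H) - 1) * cmod (\<chi> \<one>)" .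
      hence "cmod (S \<chi>) * cmod (S \<chi>) \<le> ((real (card H) - 1) * cmod (\<chi> \<one>)) * cmod (S \<chi>)"
        by (rule mult_right_mono) simp
      thus ?thesis by (simp add: power2_eq_square ac_simps)
    qed
    hence "T \<le> (\<Sum>\<chi>\<in>Irr G. (real (card H) - 1) * (cmod (\<chi> \<one>) * cmod (S \<chi>)))"
      unfolding T_def by (intro sum_mono) auto
    also have "\<dots> = (real (card H) - 1) * Dsum" unfolding Dsum_def by (simp add: sum_distrib_left)
    finally show ?thesis .
  qed
  have P: "0 < Dsum"
  proof -
    define \<chi>0 where "\<chi>0 = (\<lambda>g. if g \<in> carrier G then (1::complex) else 0)"
    have \<chi>0: "\<chi>0 \<in> Irr G" unfolding \<chi>0_def by (rule trivial_irr)
    have "S \<chi>0 = of_nat (card H')" unfolding S_def \<chi>0_def using H'c by (simp add: subset_iff)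
    hence "0 < cmod (\<chi>0 \<one>) * cmod (S \<chi>0)" using H'pos unfolding \<chi>0_def by simp
    thus ?thesis unfolding Dsum_def by (intro sum_pos2[OF finI \<chi>0]) auto
  qed
  have hpos: "0 < real (card H)" using cardH by simp
  have "(\<Sum>C\<in>CL. real (card (C \<inter> H)) ^ 2 / (real (card H) * real (card C)))
      = (\<Sum>C\<in>CL. real (card (C \<inter> H)) ^ 2 / real (card C)) / real (card H)"
    by (simp add: sum_divide_distrib divide_divide_eq_left ac_simps)
  also have "\<dots> = T / (Nr * real (card H))" unfolding T3 using Nr by simp
  also have "\<dots> \<le> (real (card H) - 1) * Dsum / (Nr * real (card H))"
    using B Nr hpos by (intro divide_right_mono) auto
  also have "\<dots> < Dsum / Nr"
  proof -
    have "(real (card H) - 1) * Dsum < real (card H) * Dsum" using P by simp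
    hence "(real (card H) - 1) * Dsum / (Nr * real (card H)) < real (card H) * Dsum / (Nr * real (card H))"
      using Nr hpos by (intro divide_strict_right_mono) auto
    also have "\<dots> = Dsum / Nr" using hpos by simp
    finally show ?thesis .
  qed
  finally show ?thesis unfolding D CL_def .
qed

end

theorem theorem1:
  fixes G :: "('g, 'b) monoid_scheme" and H :: "'g set"
  assumes "group G" and "finite (carrier G)" and "subgroup H G"
    and "H \<noteq> {\<one>\<^bsub>G\<^esub>}"
  shows "(\<Sum>C\<in>conj_classes G - {{\<one>\<^bsub>G\<^esub>}}.
            real (card (C \<inter> H)) ^ 2 / (real (card H) * real (card C)))
           < D_dist G H
       \<and> D_dist G H \<le> (\<Sum>C\<in>conj_classes G - {{\<one>\<^bsub>G\<^esub>}}.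
            real (card (C \<inter> H)) * real (card C) powr (-1/2))"
  proof -
  interpret group G by fact
  show ?thesis using lower_bound[OF assms(2) assms(3) assms(4)] upper_bound[OF assms(2) assms(3)] by simp
qed

end
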